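(* Let $p$ be a prime, let $c,d$ be positive integers, let $X$ be a set with $d$ elements, let $L_c(X)$ be the free nilpotent $\mathbb{Z}_p$-Lie algebra of class $c$ on $X$, regarded inside $\widetilde{L}_c(X)=L_c(X)\otimes_{\mathbb{Z}_p}\mathbb{Q}_p$, let $$\widehat{L}_c(X)=L_c(X)+\tfrac{1}{p}\gamma_2(L_c(X))+\dots+\tfrac{1}{p^{c-1}}\gamma_c(L_c(X)),$$ let $I$ be an ideal of $L_c(X)$ and let $$\widehat{I}=I+\tfrac{1}{p}[I,L_c(X)]+\dots+\tfrac{1}{p^{c-1}}[I,{}_{c-1}L_c(X)].$$ Then: (a) the order $\left|(L_c(X)\cap\widehat{I})/I\right|$ is bounded by a function of $p,c,d$ only; (b) the index $\left|\widehat{L}_c(X)/\widehat{I} : (L_c(X)+\widehat{I})/\widehat{I}\right|$ is bounded by a function of $p,c,d$ only.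
   Context: $L_c(X)$ is the free $\mathbb{Z}_p$-Lie algebra on $X$ modulo the $(c+1)$-st term of its lower central series; $\gamma_1(L)=L$, $\gamma_{i+1}(L)=[\gamma_i(L),L]$; $[I,{}_iL]=[\cdots[[I,L],L],\dots,L]$ with $i$ copies of $L$. Brackets of subsets denote $\mathbb{Z}_p$-spans of brackets. *)

theory Defs
  imports "HOL-Computational_Algebra.Primes" "HOL-Library.Cardinality" "HOL-Library.Function_Algebras"
begin

section \<open>The p-adic integers as the inverse limit of the rings Z/p^n\<close>

text \<open>The prime p is carried by a finite type 'p, with p = CARD('p); an element
  is a compatible sequence (f n) of residues modulo p^n, f n in [0, p^n).\<close>

typedef ('p::finite) padic_int =
  "{f :: nat \<Rightarrow> int. \<forall>n. f (Suc n) mod (int CARD('p)) ^ n = f n}"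
  by (rule exI[of _ "\<lambda>_. 0"]) simp

setup_lifting type_definition_padic_int

lemma padic_rep_mod:
  fixes m :: int
  assumes "\<And>n. f (Suc n) mod m ^ n = f n"
  shows "f n mod m ^ n = f n"
  using assms by (metis mod_mod_trivial)

lemma padic_compat_op:
  fixes m :: int
  assumes f: "\<And>n. f (Suc n) mod m ^ n = f n" and g: "\<And>n. g (Suc n) mod m ^ n = g n"
    and op: "\<And>a b c. (op (a mod c) (b mod c)) mod c = (op a b) mod c"
  shows "(op (f (Suc n)) (g (Suc n)) mod m ^ Suc n) mod m ^ n = op (f n) (g n) mod m ^ n"
proof -
  have d: "m ^ n dvd m ^ Suc n" by simp
  have "(op (f (Suc n)) (g (Suc n)) mod m ^ Suc n) mod m ^ n = op (f (Suc n)) (g (Suc n)) mod m ^ n"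
    using d by (simp add: mod_mod_cancel)
  also have "\<dots> = op (f (Suc n) mod m ^ n) (g (Suc n) mod m ^ n) mod m ^ n"
    by (simp add: op)
  finally show ?thesis using f g by simp
qed

lemma padic_compat_neg:
  fixes m :: int
  assumes f: "\<And>n. f (Suc n) mod m ^ n = f n"
  shows "(- f (Suc n) mod m ^ Suc n) mod m ^ n = (- f n) mod m ^ n"
proof -
  have d: "m ^ n dvd m ^ Suc n" by simp
  have "(- f (Suc n) mod m ^ Suc n) mod m ^ n = (- f (Suc n)) mod m ^ n"
    using d by (simp add: mod_mod_cancel)
  also have "\<dots> = (- (f (Suc n) mod m ^ n)) mod m ^ n"
    by (simp add: mod_minus_eq)
  finally show ?thesis using f by simp
qed

instantiation padic_int :: (card2) comm_ring_1
begin

lift_definition zero_padic_int :: "'a padic_int" is "\<lambda>n. 0" by simp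

lift_definition one_padic_int :: "'a padic_int" is "\<lambda>n. 1 mod (int CARD('a)) ^ n"
proof -
  fix n
  have "(int CARD('a)) ^ n dvd (int CARD('a)) ^ Suc n" by simp
  then show "1 mod int CARD('a) ^ Suc n mod int CARD('a) ^ n = 1 mod int CARD('a) ^ n"
    by (simp add: mod_mod_cancel)
qed

lift_definition plus_padic_int :: "'a padic_int \<Rightarrow> 'a padic_int \<Rightarrow> 'a padic_int"
  is "\<lambda>f g n. (f n + g n) mod (int CARD('a)) ^ n"
  by (rule padic_compat_op[where op="(+)"]) (auto simp: mod_add_eq)

lift_definition minus_padic_int :: "'a padic_int \<Rightarrow> 'a padic_int \<Rightarrow> 'a padic_int"
  is "\<lambda>f g n. (f n - g n) mod (int CARD('a)) ^ n"
  by (rule padic_compat_op[where op="(-)"]) (auto simp: mod_diff_eq)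

lift_definition uminus_padic_int :: "'a padic_int \<Rightarrow> 'a padic_int"
  is "\<lambda>f n. (- f n) mod (int CARD('a)) ^ n"
  by (rule padic_compat_neg)

lift_definition times_padic_int :: "'a padic_int \<Rightarrow> 'a padic_int \<Rightarrow> 'a padic_int"
  is "\<lambda>f g n. (f n * g n) mod (int CARD('a)) ^ n"
  by (rule padic_compat_op[where op="(*)"]) (auto simp: mod_mult_eq)

instance
proof
  fix a b c :: "'a padic_int"
  show "a + b + c = a + (b + c)"
    by transfer (rule ext, simp (no_asm) add: mod_add_left_eq mod_add_right_eq add.assoc)
  show "a + b = b + a" by transfer (rule ext, simp (no_asm) add: add.commute)
  show "0 + a = a" by transfer (rule ext, simp add: padic_rep_mod)
  show "- a + a = 0" by transfer (rule ext, simp (no_asm) add: mod_add_left_eq)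
  show "a - b = a + - b" by transfer (rule ext, simp (no_asm) add: mod_add_right_eq)
  show "a * b * c = a * (b * c)"
    by transfer (rule ext, simp (no_asm) add: mod_mult_left_eq mod_mult_right_eq mult.assoc)
  show "a * b = b * a" by transfer (rule ext, simp (no_asm) add: mult.commute)
  show "1 * a = a" by transfer (rule ext, simp add: mod_mult_left_eq padic_rep_mod)
  show "(a + b) * c = a * c + b * c"
    by transfer (rule ext, simp (no_asm) add: mod_mult_left_eq mod_add_eq distrib_right)
  show "(0::'a padic_int) \<noteq> 1"
  proof transfer
    have "2 \<le> CARD('a)" by (rule two_le_card)
    then have "(1::int) mod int CARD('a) ^ 1 = 1" by simp
    then show "(\<lambda>n. 0::int) \<noteq> (\<lambda>n. 1 mod int CARD('a) ^ n)"
      by (metis zero_neq_one)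
  qed
qed
end

abbreviation padic_p :: "'p::card2 padic_int" where
  "padic_p \<equiv> of_nat CARD('p)"

section \<open>The free (non-associative) magma algebra over a commutative ring\<close>

datatype 'x ltree = Leaf 'x | Node "'x ltree" "'x ltree"

text \<open>Elements: finitely supported coefficient functions on bracket monomials
  (binary trees) whose leaves lie in X.  Addition, subtraction, zero are pointwise.\<close>

definition magma_alg :: "'x set \<Rightarrow> ('x ltree \<Rightarrow> 'r::zero) set" where
  "magma_alg X = {f. finite {t. f t \<noteq> 0} \<and> (\<forall>t. f t \<noteq> 0 \<longrightarrow> set_ltree t \<subseteq> X)}"

definition smul :: "'r::times \<Rightarrow> ('a \<Rightarrow> 'r) \<Rightarrow> ('a \<Rightarrow> 'r)" where
  "smul r f = (\<lambda>t. r * f t)"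

definition br :: "('x ltree \<Rightarrow> 'r::{times,zero}) \<Rightarrow> ('x ltree \<Rightarrow> 'r) \<Rightarrow> ('x ltree \<Rightarrow> 'r)" where
  "br f g = (\<lambda>t. case t of Leaf _ \<Rightarrow> 0 | Node s u \<Rightarrow> f s * g u)"

inductive_set rspan :: "('a \<Rightarrow> 'r::comm_ring_1) set \<Rightarrow> ('a \<Rightarrow> 'r) set" for S where
  span_zero: "0 \<in> rspan S"
| span_base: "x \<in> S \<Longrightarrow> x \<in> rspan S"
| span_add: "x \<in> rspan S \<Longrightarrow> y \<in> rspan S \<Longrightarrow> x + y \<in> rspan S"
| span_smul: "x \<in> rspan S \<Longrightarrow> smul r x \<in> rspan S"

definition ssum :: "('a \<Rightarrow> 'r::plus) set \<Rightarrow> ('a \<Rightarrow> 'r) set \<Rightarrow> ('a \<Rightarrow> 'r) set" where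
  "ssum A B = {a + b | a b. a \<in> A \<and> b \<in> B}"

definition brs :: "('x ltree \<Rightarrow> 'r::comm_ring_1) set \<Rightarrow> ('x ltree \<Rightarrow> 'r) set \<Rightarrow> ('x ltree \<Rightarrow> 'r) set" where
  "brs A B = rspan {br a b | a b. a \<in> A \<and> b \<in> B}"

inductive_set magma_ideal_gen :: "'x set \<Rightarrow> ('x ltree \<Rightarrow> 'r::comm_ring_1) set \<Rightarrow> ('x ltree \<Rightarrow> 'r) set"
  for X S where
  mig_base: "x \<in> S \<Longrightarrow> x \<in> magma_ideal_gen X S"
| mig_zero: "0 \<in> magma_ideal_gen X S"
| mig_add: "x \<in> magma_ideal_gen X S \<Longrightarrow> y \<in> magma_ideal_gen X S \<Longrightarrow> x + y \<in> magma_ideal_gen X S"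
| mig_smul: "x \<in> magma_ideal_gen X S \<Longrightarrow> smul r x \<in> magma_ideal_gen X S"
| mig_right: "x \<in> magma_ideal_gen X S \<Longrightarrow> y \<in> magma_alg X \<Longrightarrow> br x y \<in> magma_ideal_gen X S"
| mig_left: "x \<in> magma_ideal_gen X S \<Longrightarrow> y \<in> magma_alg X \<Longrightarrow> br y x \<in> magma_ideal_gen X S"

section \<open>Free Lie algebra and free nilpotent Lie algebra (as quotients of the magma algebra)\<close>

text \<open>Relations of the free Lie algebra L(X) = magma_alg X / lie_rel X.\<close>
definition lie_rel :: "'x set \<Rightarrow> ('x ltree \<Rightarrow> 'r::comm_ring_1) set" where
  "lie_rel X = magma_ideal_gen X
     ({br a a | a. a \<in> magma_alg X} \<union>
      {br (br a b) c + br (br b c) a + br (br c a) b | a b c.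
          a \<in> magma_alg X \<and> b \<in> magma_alg X \<and> c \<in> magma_alg X})"

text \<open>free_lcs X i = preimage in magma_alg X of gamma_(i+1)(L(X)).\<close>
fun free_lcs :: "'x set \<Rightarrow> nat \<Rightarrow> ('x ltree \<Rightarrow> 'r::comm_ring_1) set" where
  "free_lcs X 0 = magma_alg X"
| "free_lcs X (Suc i) = ssum (brs (free_lcs X i) (magma_alg X)) (lie_rel X)"

text \<open>L_c(X) = magma_alg X / nil_rel X c, where nil_rel X c is the preimage of gamma_(c+1)(L(X)).\<close>
abbreviation nil_rel :: "'x set \<Rightarrow> nat \<Rightarrow> ('x ltree \<Rightarrow> 'r::comm_ring_1) set" where
  "nil_rel X c \<equiv> free_lcs X c"

text \<open>lc_lcs X c i = preimage in magma_alg X of gamma_(i+1)(L_c(X)).\<close>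
fun lc_lcs :: "'x set \<Rightarrow> nat \<Rightarrow> nat \<Rightarrow> ('x ltree \<Rightarrow> 'r::comm_ring_1) set" where
  "lc_lcs X c 0 = magma_alg X"
| "lc_lcs X c (Suc i) = ssum (brs (lc_lcs X c i) (magma_alg X)) (nil_rel X c)"

text \<open>Ideals of L_c(X), described by their preimages in magma_alg X.\<close>
definition is_lc_ideal :: "'x set \<Rightarrow> nat \<Rightarrow> ('x ltree \<Rightarrow> 'r::comm_ring_1) set \<Rightarrow> bool" where
  "is_lc_ideal X c I \<longleftrightarrow> nil_rel X c \<subseteq> I \<and> I \<subseteq> magma_alg X \<and>
     0 \<in> I \<and> (\<forall>x\<in>I. \<forall>y\<in>I. x + y \<in> I) \<and> (\<forall>r. \<forall>x\<in>I. smul r x \<in> I) \<and>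
     (\<forall>x\<in>I. \<forall>y\<in>magma_alg X. br x y \<in> I)"

text \<open>lc_comm X c I i = preimage of [I, _i L_c(X)].\<close>
fun lc_comm :: "'x set \<Rightarrow> nat \<Rightarrow> ('x ltree \<Rightarrow> 'r::comm_ring_1) set \<Rightarrow> nat \<Rightarrow> ('x ltree \<Rightarrow> 'r) set" where
  "lc_comm X c I 0 = I"
| "lc_comm X c I (Suc i) = ssum (brs (lc_comm X c I i) (magma_alg X)) (nil_rel X c)"

section \<open>The Q_p-span L_c(X) \<otimes> Q_p as the localization at p\<close>

text \<open>An element of L_c(X) \<otimes> Q_p = L_c(X)[1/p] is represented by a pair (k, m),
  m in magma_alg X, standing for (m + K)/p^k where K = nil_rel X c.\<close>
definition loc_eq :: "'r::comm_ring_1 \<Rightarrow> ('x ltree \<Rightarrow> 'r) set \<Rightarrow>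
    nat \<times> ('x ltree \<Rightarrow> 'r) \<Rightarrow> nat \<times> ('x ltree \<Rightarrow> 'r) \<Rightarrow> bool" where
  "loc_eq p K v w \<longleftrightarrow> (\<exists>t. smul (p ^ t) (smul (p ^ fst w) (snd v) - smul (p ^ fst v) (snd w)) \<in> K)"

definition loc_plus :: "'r::comm_ring_1 \<Rightarrow> nat \<times> ('x ltree \<Rightarrow> 'r) \<Rightarrow> nat \<times> ('x ltree \<Rightarrow> 'r)
    \<Rightarrow> nat \<times> ('x ltree \<Rightarrow> 'r)" where
  "loc_plus p v w = (fst v + fst w, smul (p ^ fst w) (snd v) + smul (p ^ fst v) (snd w))"

definition loc_minus :: "'r::comm_ring_1 \<Rightarrow> nat \<times> ('x ltree \<Rightarrow> 'r) \<Rightarrow> nat \<times> ('x ltree \<Rightarrow> 'r)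
    \<Rightarrow> nat \<times> ('x ltree \<Rightarrow> 'r)" where
  "loc_minus p v w = (fst v + fst w, smul (p ^ fst w) (snd v) - smul (p ^ fst v) (snd w))"

text \<open>Subsets of L_c(X) \<otimes> Q_p are given as sets of representatives, closed under loc_eq.
  frac_set p K e S is the image of (1/p^e) S for S \<subseteq> magma_alg X.\<close>
definition frac_set :: "'r::comm_ring_1 \<Rightarrow> ('x ltree \<Rightarrow> 'r) set \<Rightarrow> nat \<Rightarrow> ('x ltree \<Rightarrow> 'r) set
    \<Rightarrow> (nat \<times> ('x ltree \<Rightarrow> 'r)) set" where
  "frac_set p K e S = {v. \<exists>s\<in>S. loc_eq p K v (e, s)}"

definition loc_sum :: "'r::comm_ring_1 \<Rightarrow> ('x ltree \<Rightarrow> 'r) set \<Rightarrow> (nat \<times> ('x ltree \<Rightarrow> 'r)) set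
    \<Rightarrow> (nat \<times> ('x ltree \<Rightarrow> 'r)) set \<Rightarrow> (nat \<times> ('x ltree \<Rightarrow> 'r)) set" where
  "loc_sum p K A B = {v. \<exists>a\<in>A. \<exists>b\<in>B. loc_eq p K v (loc_plus p a b)}"

text \<open>frac_sum p K F n = F 0 + (1/p) F 1 + ... + (1/p^(n-1)) F (n-1).\<close>
fun frac_sum :: "'r::comm_ring_1 \<Rightarrow> ('x ltree \<Rightarrow> 'r) set \<Rightarrow> (nat \<Rightarrow> ('x ltree \<Rightarrow> 'r) set) \<Rightarrow> nat
    \<Rightarrow> (nat \<times> ('x ltree \<Rightarrow> 'r)) set" where
  "frac_sum p K F 0 = frac_set p K 0 {0}"
| "frac_sum p K F (Suc i) = loc_sum p K (frac_sum p K F i) (frac_set p K i (F i))"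

text \<open>The cosets of B in A (for subgroups B \<subseteq> A of L_c(X) \<otimes> Q_p); its cardinality is |A/B|.\<close>
definition loc_cosets :: "'r::comm_ring_1 \<Rightarrow> ('x ltree \<Rightarrow> 'r) set \<Rightarrow> (nat \<times> ('x ltree \<Rightarrow> 'r)) set
    \<Rightarrow> (nat \<times> ('x ltree \<Rightarrow> 'r)) set \<Rightarrow> (nat \<times> ('x ltree \<Rightarrow> 'r)) set set" where
  "loc_cosets p K A B = A // {(v, w). v \<in> A \<and> w \<in> A \<and> loc_minus p v w \<in> B}"

end

theory Submission
  imports Defs
begin


section \<open>Facts about the p-adic integers\<close>

abbreviation rep :: "'p::card2 padic_int \<Rightarrow> nat \<Rightarrow> int" where "rep \<equiv> Rep_padic_int"

lemma rep_compat: "rep a (Suc n) mod int CARD('p) ^ n = rep (a::'p::card2 padic_int) n"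
  using Rep_padic_int[of a] by auto

lemma rep_mod: "rep (a::'p::card2 padic_int) n mod int CARD('p) ^ n = rep a n"
  by (rule padic_rep_mod) (rule rep_compat)

lemma rep_range: "0 \<le> rep (a::'p::card2 padic_int) n \<and> rep a n < int CARD('p) ^ n"
proof -
  have pos: "int CARD('p) ^ n > 0" by simp
  have "rep a n = rep a n mod int CARD('p) ^ n" using rep_mod[of a n] by simp
  moreover have "rep a n mod int CARD('p) ^ n \<ge> 0" "rep a n mod int CARD('p) ^ n < int CARD('p) ^ n"
    using pos by simp_all
  ultimately show ?thesis by simp
qed

lemma rep_0: "rep (a::'p::card2 padic_int) 0 = 0"
  using rep_mod[of a 0] by simp

lemma rep_chain: "n \<le> m \<Longrightarrow> rep (a::'p::card2 padic_int) m mod int CARD('p) ^ n = rep a n"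
proof (induction m)
  case 0 then show ?case using rep_mod[of a 0] by simp
next
  case (Suc m)
  show ?case
  proof (cases "n = Suc m")
    case True then show ?thesis by (metis rep_mod)
  next
    case False
    then have nm: "n \<le> m" using Suc by simp
    have d: "int CARD('p) ^ n dvd int CARD('p) ^ m" using nm by (simp add: le_imp_power_dvd)
    have "rep a (Suc m) mod int CARD('p) ^ n = (rep a (Suc m) mod int CARD('p) ^ m) mod int CARD('p) ^ n"
      using d by (simp add: mod_mod_cancel)
    also have "\<dots> = rep a m mod int CARD('p) ^ n" by (simp add: rep_compat)
    also have "\<dots> = rep a n" using Suc.IH nm by simp
    finally show ?thesis .
  qed
qed

lemma rep_of_nat: "rep (of_nat k :: 'p::card2 padic_int) n = int k mod int CARD('p) ^ n"
proof (induction k)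
  case 0 then show ?case by (simp add: zero_padic_int.rep_eq)
next
  case (Suc k)
  have "rep (of_nat (Suc k) :: 'p padic_int) n = rep (1 + of_nat k :: 'p padic_int) n" by simp
  also have "\<dots> = (1 mod int CARD('p) ^ n + int k mod int CARD('p) ^ n) mod int CARD('p) ^ n"
    by (simp add: plus_padic_int.rep_eq one_padic_int.rep_eq Suc)
  also have "\<dots> = int (Suc k) mod int CARD('p) ^ n" by (simp add: mod_add_eq add.commute)
  finally show ?case .
qed

lemma rep_diff: "rep (a - b :: 'p::card2 padic_int) n = (rep a n - rep b n) mod int CARD('p) ^ n"
  by (simp add: minus_padic_int.rep_eq)

lemma rep_mult: "rep (a * b :: 'p::card2 padic_int) n = (rep a n * rep b n) mod int CARD('p) ^ n"
  by (simp add: times_padic_int.rep_eq)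

lemma rep_eq_iff: "(a::'p::card2 padic_int) = b \<longleftrightarrow> (\<forall>n. rep a n = rep b n)"
  by (metis Rep_padic_int_inject ext)

lemma rep_pow_mult: "rep ((padic_p::'p::card2 padic_int) ^ n * x) n = 0"
proof -
  have pp: "(padic_p::'p padic_int) ^ n = of_nat (CARD('p) ^ n)" by (simp add: of_nat_power)
  then have "rep ((padic_p::'p padic_int) ^ n) n = 0" unfolding pp rep_of_nat by simp
  then show ?thesis by (simp add: rep_mult)
qed

lemma rep_zero_div:
  assumes "rep (b::'p::card2 padic_int) n = 0"
  shows "\<exists>b'. b = padic_p ^ n * b'"
proof -
  define P where "P = int CARD('p)"
  have Ppos: "P > 0" unfolding P_def by simp
  define f where "f = rep b"
  have dv: "P ^ n dvd f j" if "n \<le> j" for j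
    using rep_chain[OF that, of b] assms unfolding f_def P_def by (simp add: dvd_eq_mod_eq_0)
  define g where "g = (\<lambda>m. f (m + n) div P ^ n)"
  have fg: "f (m + n) = P ^ n * g m" for m using dv[of "m+n"] unfolding g_def by simp
  have gc: "g (Suc m) mod P ^ m = g m" for m
  proof -
    have "f (m + n) = f (Suc m + n) mod P ^ (m + n)"
      using rep_compat[of b "m+n"] unfolding f_def P_def by simp
    also have "\<dots> = (P ^ n * g (Suc m)) mod (P ^ n * P ^ m)" by (metis fg power_add mult.commute)
    also have "\<dots> = P ^ n * (g (Suc m) mod P ^ m)" by (rule mod_mult_mult1)
    finally have "P ^ n * g m = P ^ n * (g (Suc m) mod P ^ m)" by (simp add: fg)
    then show ?thesis using Ppos by simp
  qed
  define b' where "b' = (Abs_padic_int g :: 'p padic_int)"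
  have rb': "rep b' = g" unfolding b'_def
    by (rule Abs_padic_int_inverse) (simp add: gc[unfolded P_def] P_def)
  have "b = padic_p ^ n * b'"
  proof (subst rep_eq_iff, intro allI)
    fix m
    have pp: "(padic_p::'p padic_int) ^ n = of_nat (CARD('p) ^ n)" by (simp add: of_nat_power)
    have "rep (padic_p ^ n * b') m = ((P ^ n mod P ^ m) * g m) mod P ^ m"
      unfolding pp rep_mult rep_of_nat rb' P_def by simp
    also have "\<dots> = (P ^ n * g m) mod P ^ m" by (simp add: mod_mult_left_eq)
    also have "\<dots> = f (m + n) mod P ^ m" by (simp add: fg)
    also have "\<dots> = f m" unfolding f_def P_def by (rule rep_chain) simp
    finally show "rep b m = rep (padic_p ^ n * b') m" unfolding f_def by simp
  qed
  then show ?thesis by blast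
qed

lemma rep_unit:
  assumes pr: "prime CARD('p)" and u1: "rep (u::'p::card2 padic_int) 1 \<noteq> 0"
  shows "\<exists>v. u * v = 1"
proof -
  define P where "P = int CARD('p)"
  have prP: "prime P" using pr unfolding P_def by simp
  have Ppos: "P > 0" unfolding P_def by simp
  define f where "f = rep u"
  have cop: "coprime (f n) (P ^ n)" for n
  proof (cases n)
    case 0 then show ?thesis by simp
  next
    case (Suc m)
    have "f n mod P = f 1" using rep_chain[of 1 n u] Suc unfolding f_def P_def by simp
    then have "\<not> P dvd f n" using u1 unfolding f_def by (simp add: dvd_eq_mod_eq_0)
    then have "coprime (f n) P" using prP by (simp add: prime_imp_coprime coprime_commute)
    then show ?thesis by simp
  qed
  have ex: "\<exists>g. 0 \<le> g \<and> g < P ^ n \<and> (f n * g) mod P ^ n = 1 mod P ^ n" for n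
  proof -
    obtain a b where ab: "a * f n + b * P ^ n = gcd (f n) (P ^ n)" using bezout_int by blast
    then have ab1: "a * f n + b * P ^ n = 1" using cop[of n] by simp
    have fa: "f n * a = 1 - b * P ^ n" using ab1 by (simp add: mult.commute eq_diff_eq)
    have "(f n * a) mod P ^ n = (1 - b * P ^ n) mod P ^ n" by (simp only: fa)
    also have "\<dots> = 1 mod P ^ n" by (simp add: mod_diff_eq[symmetric])
    finally have "(f n * (a mod P ^ n)) mod P ^ n = 1 mod P ^ n"
      by (simp add: mod_mult_right_eq)
    moreover have "0 \<le> a mod P ^ n \<and> a mod P ^ n < P ^ n" using Ppos by simp
    ultimately show ?thesis by blast
  qed
  have uniq: "g = g'" if "0 \<le> g" "g < P ^ n" "(f n * g) mod P ^ n = 1 mod P ^ n"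
     "0 \<le> g'" "g' < P ^ n" "(f n * g') mod P ^ n = 1 mod P ^ n" for n g g'
  proof -
    have "(f n * g) mod P ^ n = (f n * g') mod P ^ n" using that by simp
    then have "P ^ n dvd f n * g - f n * g'" by (simp add: mod_eq_dvd_iff)
    then have "P ^ n dvd f n * (g - g')" by (simp add: algebra_simps)
    then have "P ^ n dvd (g - g')" using cop[of n]
      by (metis coprime_commute coprime_dvd_mult_right_iff)
    then have "g mod P ^ n = g' mod P ^ n" by (simp add: mod_eq_dvd_iff)
    then show ?thesis using that by simp
  qed
  define g where "g = (\<lambda>n. SOME g. 0 \<le> g \<and> g < P ^ n \<and> (f n * g) mod P ^ n = 1 mod P ^ n)"
  have gp: "0 \<le> g n \<and> g n < P ^ n \<and> (f n * g n) mod P ^ n = 1 mod P ^ n" for n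
    unfolding g_def using someI_ex[OF ex[of n]] by blast
  have gc: "g (Suc n) mod P ^ n = g n" for n
  proof -
    have d: "P ^ n dvd P ^ Suc n" by simp
    have fS: "f (Suc n) mod P ^ n = f n" using rep_compat[of u n] unfolding f_def P_def by simp
    have "(f n * (g (Suc n) mod P ^ n)) mod P ^ n = (f (Suc n) * g (Suc n)) mod P ^ n"
      by (metis fS mod_mult_eq mod_mod_trivial)
    also have "\<dots> = ((f (Suc n) * g (Suc n)) mod P ^ Suc n) mod P ^ n"
      using d by (simp add: mod_mod_cancel)
    also have "\<dots> = (1 mod P ^ Suc n) mod P ^ n" using gp[of "Suc n"] by simp
    also have "\<dots> = 1 mod P ^ n" using d by (simp add: mod_mod_cancel)
    finally have e: "(f n * (g (Suc n) mod P ^ n)) mod P ^ n = 1 mod P ^ n" .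
    show ?thesis
      by (rule uniq[OF _ _ e]) (use Ppos gp[of n] in auto)
  qed
  define v where "v = (Abs_padic_int g :: 'p padic_int)"
  have rv: "rep v = g" unfolding v_def
    by (rule Abs_padic_int_inverse) (simp add: gc[unfolded P_def] P_def)
  have "u * v = 1"
  proof (subst rep_eq_iff, intro allI)
    fix n
    show "rep (u * v) n = rep (1::'p padic_int) n"
      using gp[of n] unfolding rep_mult rv one_padic_int.rep_eq f_def P_def by simp
  qed
  then show ?thesis by blast
qed

lemma rep_nonzero: "(a::'p::card2 padic_int) \<noteq> 0 \<Longrightarrow> \<exists>n. rep a n \<noteq> 0"
  by (subst (asm) rep_eq_iff) (simp add: zero_padic_int.rep_eq)

lemma principal_ideal:
  assumes pr: "prime CARD('p)"
    and z: "(0::'p::card2 padic_int) \<in> A"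
    and ad: "\<And>x y. x \<in> A \<Longrightarrow> y \<in> A \<Longrightarrow> x + y \<in> A"
    and ml: "\<And>r x. x \<in> A \<Longrightarrow> r * x \<in> A"
  shows "\<exists>a0\<in>A. \<forall>b\<in>A. \<exists>l. b = l * a0"
proof (cases "A \<subseteq> {0}")
  case True then show ?thesis using z by (intro bexI[of _ 0]) auto
next
  case False
  then obtain b0 where b0: "b0 \<in> A" "b0 \<noteq> 0" by auto
  then obtain n0 where n0: "rep b0 n0 \<noteq> 0" using rep_nonzero by blast
  then obtain n1 where "n0 = Suc n1" using rep_0 by (cases n0) auto
  then have exn: "\<exists>n. \<exists>b\<in>A. rep b (Suc n) \<noteq> 0" using b0 n0 by blast
  define k where "k = (LEAST n. \<exists>b\<in>A. rep b (Suc n) \<noteq> 0)"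
  obtain a where a: "a \<in> A" "rep a (Suc k) \<noteq> 0"
    using LeastI_ex[OF exn] unfolding k_def by blast
  have allk: "rep b k = 0" if "b \<in> A" for b
  proof (cases k)
    case 0 then show ?thesis using rep_0 by simp
  next
    case (Suc k')
    then have "\<not> (\<exists>b\<in>A. rep b (Suc k') \<noteq> 0)"
      using not_less_Least[of k' "\<lambda>n. \<exists>b\<in>A. rep b (Suc n) \<noteq> 0"] unfolding k_def by simp
    then show ?thesis using that Suc by simp
  qed
  obtain u where u: "a = padic_p ^ k * u" using rep_zero_div[OF allk[OF a(1)]] by blast
  have "rep u 1 \<noteq> 0"
  proof
    assume "rep u 1 = 0"
    then obtain u' where "u = padic_p ^ 1 * u'" using rep_zero_div by blast
    then have "a = padic_p ^ Suc k * u'" using u by (simp add: mult.assoc)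
    then show False using a(2) rep_pow_mult by metis
  qed
  then obtain v where v: "u * v = 1" using rep_unit[OF pr] by blast
  show ?thesis
  proof (intro bexI[OF _ a(1)] ballI)
    fix b assume "b \<in> A"
    then obtain b' where b': "b = padic_p ^ k * b'" using rep_zero_div allk by blast
    have "b = b' * (u * v) * padic_p ^ k" using b' v by simp
    also have "\<dots> = (b' * v) * a" using u by (simp add: ac_simps)
    finally have "b = (b' * v) * a" .
    then show "\<exists>l. b = l * a" by blast
  qed
qed




lemma smul_apply: "smul r f t = r * f t"
  by (simp add: smul_def)

lemma smul_add: "smul r (f + g) = smul r f + smul (r::'r::comm_ring_1) g"
  by (rule ext) (simp add: smul_apply distrib_left)
lemma smul_diff: "smul r (f - g) = smul r f - smul (r::'r::comm_ring_1) g"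
  by (rule ext) (simp add: smul_apply right_diff_distrib)
lemma smul_smul: "smul a (smul b f) = smul (a * b) (f :: 'a \<Rightarrow> 'r::comm_ring_1)"
  by (rule ext) (simp add: smul_apply mult.assoc)
lemma smul_one [simp]: "smul 1 (f :: 'a \<Rightarrow> 'r::comm_ring_1) = f"
  by (rule ext) (simp add: smul_apply)
lemma smul_zero [simp]: "smul r (0 :: 'a \<Rightarrow> 'r::comm_ring_1) = 0"
  by (rule ext) (simp add: smul_apply)
lemma smul_zero_left [simp]: "smul 0 (f :: 'a \<Rightarrow> 'r::comm_ring_1) = 0"
  by (rule ext) (simp add: smul_apply)
lemma smul_neg1: "smul (-1) (f :: 'a \<Rightarrow> 'r::comm_ring_1) = - f"
  by (rule ext) (simp add: smul_apply)
lemma smul_addl: "smul (a + b) (f :: 'a \<Rightarrow> 'r::comm_ring_1) = smul a f + smul b f"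
  by (rule ext) (simp add: smul_apply distrib_right)

lemma zero_fun_eta: "(\<lambda>a. 0) = (0 :: 'a \<Rightarrow> 'b::zero)"
  by (simp add: zero_fun_def)
lemma plus_fun_eta: "(\<lambda>a. x a + y a) = (x + y :: 'a \<Rightarrow> 'b::plus)"
  by (simp add: plus_fun_def)

definition smod :: "('a \<Rightarrow> 'r::comm_ring_1) set \<Rightarrow> bool" where
  "smod W \<longleftrightarrow> 0 \<in> W \<and> (\<forall>x\<in>W. \<forall>y\<in>W. x + y \<in> W) \<and> (\<forall>r. \<forall>x\<in>W. smul r x \<in> W)"

lemma smod_zero: "smod W \<Longrightarrow> 0 \<in> W" by (simp add: smod_def)
lemma smod_add: "smod W \<Longrightarrow> x \<in> W \<Longrightarrow> y \<in> W \<Longrightarrow> x + y \<in> W" by (simp add: smod_def)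
lemma smod_smul: "smod W \<Longrightarrow> x \<in> W \<Longrightarrow> smul r x \<in> W" by (simp add: smod_def)
lemma smod_neg: "smod W \<Longrightarrow> x \<in> W \<Longrightarrow> - x \<in> W"
  using smod_smul[of W x "-1"] by (simp add: smul_neg1)
lemma smod_diff: "smod W \<Longrightarrow> x \<in> W \<Longrightarrow> y \<in> W \<Longrightarrow> x - y \<in> W"
  using smod_add[of W x "- y"] smod_neg[of W y] by simp
lemma smod_sum: "smod W \<Longrightarrow> (\<And>i. i \<in> S \<Longrightarrow> f i \<in> W) \<Longrightarrow> sum f S \<in> W"
proof (induction S rule: infinite_finite_induct)
  case (infinite A) then show ?case by (metis smod_zero sum.infinite)
next
  case empty then show ?case by (metis smod_zero sum.empty)
next
  case (insert x F)
  then have "sum f (insert x F) = f x + sum f F" by simp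
  then show ?case using insert by (metis insertCI smod_add)
qed

lemma smod_diff_iff: "smod W \<Longrightarrow> y \<in> W \<Longrightarrow> x - y \<in> W \<Longrightarrow> x \<in> W"
  using smod_add[of W "x - y" y] by simp

lemma rspan_smod: "smod (rspan S)"
  by (simp add: smod_def rspan.intros)

lemma rspan_sub: "smod W \<Longrightarrow> S \<subseteq> W \<Longrightarrow> rspan S \<subseteq> W"
proof
  fix x assume W: "smod W" and S: "S \<subseteq> W" and x: "x \<in> rspan S"
  from x W S show "x \<in> W"
  proof (induction rule: rspan.induct)
    case span_zero then show ?case by (blast intro: smod_zero)
  next
    case (span_base x) then show ?case by blast
  next
    case (span_add x y) then show ?case using smod_add[of W x y] by (simp add: plus_fun_def)
  next
    case (span_smul x r) then show ?case by (simp add: smod_smul)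
  qed
qed

lemma rspan_mono: "S \<subseteq> T \<Longrightarrow> rspan S \<subseteq> rspan T"
proof (rule rspan_sub[OF rspan_smod])
  assume "S \<subseteq> T"
  then show "S \<subseteq> rspan T" using rspan.span_base by blast
qed

lemma ssum_mem: "a \<in> A \<Longrightarrow> b \<in> B \<Longrightarrow> a + b \<in> ssum A B"
  unfolding ssum_def by blast

lemma ssum_smod:
  assumes A: "smod A" and B: "smod B"
  shows "smod (ssum A B)"
  unfolding smod_def
proof (intro conjI ballI allI)
  have "0 + 0 \<in> ssum A B" using A B by (intro ssum_mem smod_zero)
  then show "0 \<in> ssum A B" by simp
next
  fix x y assume "x \<in> ssum A B" "y \<in> ssum A B"
  then obtain a b a' b' where e: "x = a + b" "y = a' + b'" and m: "a \<in> A" "b \<in> B" "a' \<in> A" "b' \<in> B"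
    unfolding ssum_def by blast
  have "(a + a') + (b + b') \<in> ssum A B" using m A B by (intro ssum_mem smod_add)
  moreover have "x + y = (a + a') + (b + b')" using e by (simp add: ac_simps)
  ultimately show "x + y \<in> ssum A B" by simp
next
  fix r x assume "x \<in> ssum A B"
  then obtain a b where e: "x = a + b" and m: "a \<in> A" "b \<in> B"
    unfolding ssum_def by blast
  have "smul r a + smul r b \<in> ssum A B" using m A B by (intro ssum_mem smod_smul)
  then show "smul r x \<in> ssum A B" using e by (simp add: smul_add)
qed

lemma ssum_sub: "smod W \<Longrightarrow> A \<subseteq> W \<Longrightarrow> B \<subseteq> W \<Longrightarrow> ssum A B \<subseteq> W"
  unfolding ssum_def by (auto intro: smod_add)

lemma ssum_left: "0 \<in> B \<Longrightarrow> A \<subseteq> ssum A (B :: ('a \<Rightarrow> 'r::comm_ring_1) set)"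
proof
  fix a assume "0 \<in> B" "a \<in> A"
  then have "a + 0 \<in> ssum A B" unfolding ssum_def by blast
  then show "a \<in> ssum A B" by simp
qed
lemma ssum_right: "0 \<in> A \<Longrightarrow> B \<subseteq> ssum A (B :: ('a \<Rightarrow> 'r::comm_ring_1) set)"
proof
  fix a assume "0 \<in> A" "a \<in> B"
  then have "0 + a \<in> ssum A B" unfolding ssum_def by blast
  then show "a \<in> ssum A B" by simp
qed
lemma ssum_mono: "A \<subseteq> A' \<Longrightarrow> B \<subseteq> B' \<Longrightarrow> ssum A B \<subseteq> ssum A' B'"
  unfolding ssum_def by blast

lemma image_smul_smod: "smod W \<Longrightarrow> smod (smul c ` W)"
  unfolding smod_def
proof (intro conjI ballI allI)
  assume W: "0 \<in> W \<and> (\<forall>x\<in>W. \<forall>y\<in>W. x + y \<in> W) \<and> (\<forall>r. \<forall>x\<in>W. smul r x \<in> W)"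
  have "smul c 0 \<in> smul c ` W" using W by blast
  then show "0 \<in> smul c ` W" by simp
  fix x y assume "x \<in> smul c ` W" "y \<in> smul c ` W"
  then obtain a b where "x = smul c a" "y = smul c b" "a \<in> W" "b \<in> W" by blast
  moreover have "smul c (a + b) \<in> smul c ` W" using W \<open>a \<in> W\<close> \<open>b \<in> W\<close> by blast
  ultimately show "x + y \<in> smul c ` W" by (simp add: smul_add)
next
  fix r x
  assume W: "0 \<in> W \<and> (\<forall>x\<in>W. \<forall>y\<in>W. x + y \<in> W) \<and> (\<forall>r. \<forall>x\<in>W. smul r x \<in> W)"
    and "x \<in> smul c ` W"
  then obtain a where "x = smul c a" "a \<in> W" by blast
  moreover have "smul c (smul r a) \<in> smul c ` W" using W \<open>a \<in> W\<close> by blast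
  ultimately show "smul r x \<in> smul c ` W" by (simp add: smul_smul mult.commute)
qed

lemma magma_smod: "smod (magma_alg X :: ('x ltree \<Rightarrow> 'r::comm_ring_1) set)"
  unfolding smod_def magma_alg_def
proof (intro conjI ballI allI)
  show "(0::'x ltree \<Rightarrow> 'r) \<in> {f. finite {t. f t \<noteq> 0} \<and> (\<forall>t. f t \<noteq> 0 \<longrightarrow> set_ltree t \<subseteq> X)}" by simp
  fix x y :: "'x ltree \<Rightarrow> 'r"
  assume x: "x \<in> {f. finite {t. f t \<noteq> 0} \<and> (\<forall>t. f t \<noteq> 0 \<longrightarrow> set_ltree t \<subseteq> X)}"
     and y: "y \<in> {f. finite {t. f t \<noteq> 0} \<and> (\<forall>t. f t \<noteq> 0 \<longrightarrow> set_ltree t \<subseteq> X)}"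
  have "{t. (x + y) t \<noteq> 0} \<subseteq> {t. x t \<noteq> 0} \<union> {t. y t \<noteq> 0}" by auto
  moreover have "finite ({t. x t \<noteq> 0} \<union> {t. y t \<noteq> 0})" using x y by simp
  ultimately have "finite {t. (x + y) t \<noteq> 0}" by (rule finite_subset)
  moreover have "\<forall>t. (x + y) t \<noteq> 0 \<longrightarrow> set_ltree t \<subseteq> X"
  proof (intro allI impI)
    fix t assume "(x + y) t \<noteq> 0"
    then have "x t \<noteq> 0 \<or> y t \<noteq> 0" by auto
    then show "set_ltree t \<subseteq> X" using x y by auto
  qed
  ultimately show "x + y \<in> {f. finite {t. f t \<noteq> 0} \<and> (\<forall>t. f t \<noteq> 0 \<longrightarrow> set_ltree t \<subseteq> X)}" by simp
next
  fix r x
  assume x: "(x :: 'x ltree \<Rightarrow> 'r) \<in> {f. finite {t. f t \<noteq> 0} \<and> (\<forall>t. f t \<noteq> 0 \<longrightarrow> set_ltree t \<subseteq> X)}"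
  have "{t. smul r x t \<noteq> 0} \<subseteq> {t. x t \<noteq> 0}" by (auto simp: smul_apply)
  then show "smul r x \<in> {f. finite {t. f t \<noteq> 0} \<and> (\<forall>t. f t \<noteq> 0 \<longrightarrow> set_ltree t \<subseteq> X)}"
    using x finite_subset[OF \<open>{t. smul r x t \<noteq> 0} \<subseteq> {t. x t \<noteq> 0}\<close>] by (auto simp: smul_apply)
qed

lemma br_apply_Node [simp]: "br f g (Node s u) = f s * g u"
  by (simp add: br_def)
lemma br_apply_Leaf [simp]: "br f g (Leaf x) = 0"
  by (simp add: br_def)

lemma br_add_left: "br (f + g) h = br f h + br g (h :: 'x ltree \<Rightarrow> 'r::comm_ring_1)"
  by (rule ext, simp add: br_def distrib_right split: ltree.split)
lemma br_add_right: "br h (f + g) = br h f + br h (g :: 'x ltree \<Rightarrow> 'r::comm_ring_1)"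
  by (rule ext, simp add: br_def distrib_left split: ltree.split)
lemma br_smul_left: "br (smul r f) h = smul r (br f (h :: 'x ltree \<Rightarrow> 'r::comm_ring_1))"
  by (rule ext, simp add: br_def smul_apply mult.assoc split: ltree.split)
lemma br_smul_right: "br h (smul r f) = smul r (br h (f :: 'x ltree \<Rightarrow> 'r::comm_ring_1))"
  by (rule ext, simp add: br_def smul_apply ac_simps split: ltree.split)
lemma br_zero_left [simp]: "br 0 (h :: 'x ltree \<Rightarrow> 'r::comm_ring_1) = 0"
  by (rule ext, simp add: br_def split: ltree.split)
lemma br_zero_right [simp]: "br h (0 :: 'x ltree \<Rightarrow> 'r::comm_ring_1) = 0"
  by (rule ext, simp add: br_def split: ltree.split)
lemma br_diff_left: "br (f - g) h = br f h - br g (h :: 'x ltree \<Rightarrow> 'r::comm_ring_1)"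
  by (rule ext, simp add: br_def left_diff_distrib split: ltree.split)
lemma br_diff_right: "br h (f - g) = br h f - br h (g :: 'x ltree \<Rightarrow> 'r::comm_ring_1)"
  by (rule ext, simp add: br_def right_diff_distrib split: ltree.split)

lemma br_magma:
  assumes x: "x \<in> magma_alg X" and y: "y \<in> magma_alg X"
  shows "br x y \<in> (magma_alg X :: ('x ltree \<Rightarrow> 'r::comm_ring_1) set)"
proof -
  have fx: "finite {t. x t \<noteq> 0}" and fy: "finite {t. y t \<noteq> 0}"
    using x y by (auto simp: magma_alg_def)
  have "{t. br x y t \<noteq> 0} \<subseteq> (\<lambda>(s, u). Node s u) ` ({t. x t \<noteq> 0} \<times> {t. y t \<noteq> 0})"
  proof
    fix t assume t: "t \<in> {t. br x y t \<noteq> 0}"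
    show "t \<in> (\<lambda>(s, u). Node s u) ` ({t. x t \<noteq> 0} \<times> {t. y t \<noteq> 0})"
    proof (cases t)
      case (Leaf a) then show ?thesis using t by simp
    next
      case (Node s u)
      then have "x s \<noteq> 0" "y u \<noteq> 0" using t by auto
      then have "(s, u) \<in> {t. x t \<noteq> 0} \<times> {t. y t \<noteq> 0}" by simp
      then show ?thesis using Node by (metis (no_types, lifting) case_prod_conv image_eqI)
    qed
  qed
  moreover have "finite ((\<lambda>(s, u). Node s u) ` ({t. x t \<noteq> 0} \<times> {t. y t \<noteq> 0}))"
    using fx fy by simp
  ultimately have "finite {t. br x y t \<noteq> 0}" by (rule finite_subset)
  moreover have "set_ltree t \<subseteq> X" if "br x y t \<noteq> 0" for t
  proof (cases t)
    case (Leaf a) then show ?thesis using that by simp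
  next
    case (Node s u)
    then have "x s \<noteq> 0" "y u \<noteq> 0" using that by auto
    then show ?thesis using Node x y by (auto simp: magma_alg_def)
  qed
  ultimately show ?thesis unfolding magma_alg_def by blast
qed

lemma brs_sub: "smod W \<Longrightarrow> (\<And>a b. a \<in> A \<Longrightarrow> b \<in> B \<Longrightarrow> br a b \<in> W) \<Longrightarrow> brs A B \<subseteq> W"
  unfolding brs_def by (rule rspan_sub) auto

lemma brs_mono: "A \<subseteq> A' \<Longrightarrow> brs A B \<subseteq> brs A' B"
  unfolding brs_def by (rule rspan_mono) blast

lemma brs_smod: "smod (brs A B)"
  unfolding brs_def by (rule rspan_smod)

lemma brs_mem: "a \<in> A \<Longrightarrow> b \<in> B \<Longrightarrow> br a b \<in> brs A B"
  unfolding brs_def by (rule rspan.span_base) blast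




lemma mig_smod: "smod (magma_ideal_gen X S)"
  by (simp add: smod_def magma_ideal_gen.intros)

lemma mig_sub_magma:
  assumes "S \<subseteq> magma_alg X"
  shows "magma_ideal_gen X S \<subseteq> (magma_alg X :: ('x ltree \<Rightarrow> 'r::comm_ring_1) set)"
proof
  fix x :: "'x ltree \<Rightarrow> 'r" assume "x \<in> magma_ideal_gen X S"
  then show "x \<in> magma_alg X"
  proof (induction rule: magma_ideal_gen.induct)
    case (mig_base x) then show ?case using assms by blast
  next
    case mig_zero then show ?case by (rule smod_zero[OF magma_smod])
  next
    case (mig_add x y) then show ?case by (metis smod_add magma_smod)
  next
    case (mig_smul x r) then show ?case by (metis smod_smul magma_smod)
  next
    case (mig_right x y) then show ?case by (metis br_magma)
  next
    case (mig_left x y) then show ?case by (metis br_magma)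
  qed
qed

lemma lie_rel_smod: "smod (lie_rel X)"
  unfolding lie_rel_def by (rule mig_smod)

lemma lie_rel_magma: "lie_rel X \<subseteq> (magma_alg X :: ('x ltree \<Rightarrow> 'r::comm_ring_1) set)"
  unfolding lie_rel_def
proof (rule mig_sub_magma)
  have M: "smod (magma_alg X :: ('x ltree \<Rightarrow> 'r) set)" by (rule magma_smod)
  show "{br a a |a. a \<in> magma_alg X} \<union>
    {br (br a b) c + br (br b c) a + br (br c a) b |a b c.
        a \<in> magma_alg X \<and> b \<in> magma_alg X \<and> c \<in> magma_alg X} \<subseteq> (magma_alg X :: ('x ltree \<Rightarrow> 'r) set)"
    using M by (auto intro!: smod_add br_magma)
qed

lemma lie_rel_right: "x \<in> lie_rel X \<Longrightarrow> y \<in> magma_alg X \<Longrightarrow> br x y \<in> lie_rel X"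
  unfolding lie_rel_def by (rule mig_right)
lemma lie_rel_left: "x \<in> lie_rel X \<Longrightarrow> y \<in> magma_alg X \<Longrightarrow> br y x \<in> lie_rel X"
  unfolding lie_rel_def by (rule mig_left)

lemma lie_rel_sq: "a \<in> magma_alg X \<Longrightarrow> br a a \<in> lie_rel X"
  unfolding lie_rel_def by (rule mig_base) blast

lemma lie_rel_jacobi:
  "a \<in> magma_alg X \<Longrightarrow> b \<in> magma_alg X \<Longrightarrow> c \<in> magma_alg X \<Longrightarrow>
   br (br a b) c + br (br b c) a + br (br c a) b \<in> lie_rel X"
  unfolding lie_rel_def by (rule mig_base) blast

lemma lie_rel_anti:
  assumes a: "a \<in> magma_alg X" and b: "b \<in> magma_alg X"
  shows "br a b + br b a \<in> (lie_rel X :: ('x ltree \<Rightarrow> 'r::comm_ring_1) set)"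
proof -
  have ab: "a + b \<in> magma_alg X" using a b magma_smod smod_add by blast
  have "br a b + br b a = br (a + b) (a + b) - br a a - br b b"
    by (simp add: br_add_left br_add_right algebra_simps)
  then show ?thesis
    using lie_rel_sq[OF ab] lie_rel_sq[OF a] lie_rel_sq[OF b] lie_rel_smod smod_diff by metis
qed

section \<open>Lower central series of the free Lie algebra\<close>

lemma free_lcs_smod: "smod (free_lcs X i :: ('x ltree \<Rightarrow> 'r::comm_ring_1) set)"
  by (cases i) (auto intro: ssum_smod brs_smod lie_rel_smod magma_smod)

lemma free_lcs_magma: "free_lcs X i \<subseteq> (magma_alg X :: ('x ltree \<Rightarrow> 'r::comm_ring_1) set)"
proof (induction i)
  case 0 then show ?case by simp
next
  case (Suc i)
  have "brs (free_lcs X i) (magma_alg X) \<subseteq> (magma_alg X :: ('x ltree \<Rightarrow> 'r) set)"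
    using Suc by (intro brs_sub magma_smod) (auto intro: br_magma)
  then show ?case by (simp add: ssum_sub magma_smod lie_rel_magma)
qed

lemma lie_rel_lcs: "lie_rel X \<subseteq> (free_lcs X i :: ('x ltree \<Rightarrow> 'r::comm_ring_1) set)"
proof (cases i)
  case 0 then show ?thesis by (simp add: lie_rel_magma)
next
  case (Suc j) then show ?thesis
    by (simp add: ssum_right smod_zero brs_smod)
qed

lemma free_lcs_Suc_sub: "free_lcs X (Suc i) \<subseteq> (free_lcs X i :: ('x ltree \<Rightarrow> 'r::comm_ring_1) set)"
proof (induction i)
  case 0 then show ?case using free_lcs_magma[of X 1] by simp
next
  case (Suc i)
  have "free_lcs X (Suc (Suc i)) = ssum (brs (free_lcs X (Suc i)) (magma_alg X)) (lie_rel X :: ('x ltree \<Rightarrow> 'r) set)" by simp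
  also have "\<dots> \<subseteq> ssum (brs (free_lcs X i) (magma_alg X)) (lie_rel X)"
    by (intro ssum_mono brs_mono Suc.IH subset_refl)
  finally show ?case by simp
qed

lemma free_lcs_antimono: "i \<le> j \<Longrightarrow> free_lcs X j \<subseteq> (free_lcs X i :: ('x ltree \<Rightarrow> 'r::comm_ring_1) set)"
proof (induction j)
  case 0 then show ?case by simp
next
  case (Suc j)
  show ?case
  proof (cases "i = Suc j")
    case True then show ?thesis by simp
  next
    case False then show ?thesis using Suc free_lcs_Suc_sub[of X j] by auto
  qed
qed

lemma free_lcs_br: "x \<in> free_lcs X i \<Longrightarrow> y \<in> magma_alg X \<Longrightarrow>
    br x y \<in> (free_lcs X (Suc i) :: ('x ltree \<Rightarrow> 'r::comm_ring_1) set)"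
  using ssum_left[OF smod_zero[OF lie_rel_smod]] brs_mem by fastforce




lemma free_lcs_bracket:
  "x \<in> free_lcs X i \<Longrightarrow> y \<in> free_lcs X j \<Longrightarrow>
   br x y \<in> (free_lcs X (i + j + 1) :: ('x ltree \<Rightarrow> 'r::comm_ring_1) set)"
proof (induction j arbitrary: i x y)
  case 0 then show ?case using free_lcs_br by simp
next
  case (Suc j)
  let ?N = "free_lcs X (i + Suc j + 1) :: ('x ltree \<Rightarrow> 'r) set"
  have N: "smod ?N" by (rule free_lcs_smod)
  have LN: "lie_rel X \<subseteq> ?N" by (rule lie_rel_lcs)
  have xM: "x \<in> magma_alg X" using Suc.prems(1) free_lcs_magma by blast
  from Suc.prems(2) obtain y1 l where y: "y = y1 + l" and y1: "y1 \<in> brs (free_lcs X j) (magma_alg X)"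
    and l: "l \<in> lie_rel X" by (auto simp: ssum_def)
  have A1: "br x l \<in> ?N" using lie_rel_left[OF l xM] LN by blast
  have A2: "br x y1 \<in> ?N"
  proof -
    have "br x w \<in> ?N" if "w \<in> rspan {br b z |b z. b \<in> free_lcs X j \<and> z \<in> magma_alg X}" for w
      using that
    proof (induction rule: rspan.induct)
      case span_zero
      have "br x 0 \<in> ?N" using smod_zero[OF N] by simp
      then show ?case by (simp only: zero_fun_def)
    next
      case (span_base w)
      then obtain b z where w: "w = br b z" and b: "b \<in> free_lcs X j" and z: "z \<in> magma_alg X" by blast
      have bM: "b \<in> magma_alg X" using b free_lcs_magma by blast
      have bzM: "br b z \<in> magma_alg X" using bM z br_magma by blast
      have T1: "br x (br b z) + br (br b z) x \<in> ?N" using lie_rel_anti[OF xM bzM] LN by blast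
      have T2: "br (br x b) z + br (br b z) x + br (br z x) b \<in> ?N"
        using lie_rel_jacobi[OF xM bM z] LN by blast
      have xb: "br x b \<in> free_lcs X (i + j + 1)" using Suc.IH[OF Suc.prems(1) b] .
      have T3: "br (br x b) z \<in> ?N" using free_lcs_br[OF xb z] by simp
      have zx: "br z x \<in> free_lcs X (Suc i)"
      proof -
        have "br x z \<in> free_lcs X (Suc i)" using free_lcs_br[OF Suc.prems(1) z] .
        moreover have "br z x + br x z \<in> free_lcs X (Suc i)"
          using lie_rel_anti[OF z xM] lie_rel_lcs by blast
        ultimately show ?thesis using free_lcs_smod smod_diff by fastforce
      qed
      have T4: "br (br z x) b \<in> ?N" using Suc.IH[OF zx b] by simp
      have "br x (br b z) = (br x (br b z) + br (br b z) x)
          - (br (br x b) z + br (br b z) x + br (br z x) b) + br (br x b) z + br (br z x) b"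
        by (simp add: algebra_simps)
      then show ?case using T1 T2 T3 T4 N w by (metis smod_add smod_diff)
    next
      case (span_add u v)
      have "br x (u + v) \<in> ?N" using smod_add[OF N span_add.IH] by (simp only: br_add_right)
      then show ?case by (simp only: plus_fun_def)
    next
      case (span_smul u r) then show ?case using smod_smul[OF N span_smul.IH] by (simp only: br_smul_right)
    qed
    then show ?thesis using y1 unfolding brs_def by blast
  qed
  have "br x y = br x y1 + br x l" using y by (simp only: br_add_right)
  then show ?case using smod_add[OF N A2 A1] by (simp only:)
qed


definition dlt :: "'x ltree \<Rightarrow> ('x ltree \<Rightarrow> 'r::comm_ring_1)" where
  "dlt t = (\<lambda>s. if s = t then 1 else 0)"

lemma br_dlt: "br (dlt s) (dlt u) = (dlt (Node s u) :: 'x ltree \<Rightarrow> 'r::comm_ring_1)"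
  by (rule ext) (simp add: br_def dlt_def split: ltree.split)

lemma dlt_magma: "set_ltree t \<subseteq> X \<Longrightarrow> (dlt t :: 'x ltree \<Rightarrow> 'r::comm_ring_1) \<in> magma_alg X"
proof -
  assume t: "set_ltree t \<subseteq> X"
  have "{s. (dlt t :: 'x ltree \<Rightarrow> 'r) s \<noteq> 0} \<subseteq> {t}" by (auto simp: dlt_def)
  then have "finite {s. (dlt t :: 'x ltree \<Rightarrow> 'r) s \<noteq> 0}" by (rule finite_subset) simp
  moreover have "\<forall>s. (dlt t :: 'x ltree \<Rightarrow> 'r) s \<noteq> 0 \<longrightarrow> set_ltree s \<subseteq> X"
    using t by (simp add: dlt_def)
  ultimately show ?thesis by (simp add: magma_alg_def)
qed

fun nleaves :: "'x ltree \<Rightarrow> nat" where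
  "nleaves (Leaf x) = 1"
| "nleaves (Node s u) = nleaves s + nleaves u"

lemma nleaves_pos: "nleaves t \<ge> 1"
  by (induction t) auto

lemma dlt_lcs: "set_ltree t \<subseteq> X \<Longrightarrow>
    (dlt t :: 'x ltree \<Rightarrow> 'r::comm_ring_1) \<in> free_lcs X (nleaves t - 1)"
proof (induction t)
  case (Leaf x) then show ?case by (simp add: dlt_magma)
next
  case (Node s u)
  then have s: "(dlt s :: 'x ltree \<Rightarrow> 'r) \<in> free_lcs X (nleaves s - 1)"
    and u: "(dlt u :: 'x ltree \<Rightarrow> 'r) \<in> free_lcs X (nleaves u - 1)" by auto
  have A: "dlt (Node s u) \<in> (free_lcs X (nleaves s - 1 + (nleaves u - 1) + 1) :: ('x ltree \<Rightarrow> 'r) set)"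
    using free_lcs_bracket[OF s u] by (simp only: br_dlt)
  have eq: "nleaves s - 1 + (nleaves u - 1) + 1 = nleaves (Node s u) - 1"
    using nleaves_pos[of s] nleaves_pos[of u] by simp
  show ?case using A by (simp only: eq)
qed

lemma dlt_in_K: "set_ltree t \<subseteq> X \<Longrightarrow> nleaves t > c \<Longrightarrow>
    (dlt t :: 'x ltree \<Rightarrow> 'r::comm_ring_1) \<in> free_lcs X c"
proof -
  assume t: "set_ltree t \<subseteq> X" and c: "nleaves t > c"
  have "c \<le> nleaves t - 1" using c by simp
  then have "free_lcs X (nleaves t - 1) \<subseteq> (free_lcs X c :: ('x ltree \<Rightarrow> 'r) set)"
    by (rule free_lcs_antimono)
  then show ?thesis using dlt_lcs[OF t] by blast
qed

definition tset :: "'x set \<Rightarrow> nat \<Rightarrow> 'x ltree set" where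
  "tset X n = {t. set_ltree t \<subseteq> X \<and> nleaves t \<le> n}"

fun tb :: "nat \<Rightarrow> nat \<Rightarrow> nat" where
  "tb d 0 = 0"
| "tb d (Suc n) = d + tb d n * tb d n"

lemma tset_finite_card: "finite X \<Longrightarrow> finite (tset X n) \<and> card (tset X n) \<le> tb (card X) n"
proof (induction n)
  case 0
  have "\<not> nleaves t \<le> 0" for t :: "'x ltree" using nleaves_pos[of t] by simp
  then have "tset X 0 = {}" unfolding tset_def by blast
  then show ?case by simp
next
  case (Suc n)
  let ?T = "tset X n"
  have sub: "tset X (Suc n) \<subseteq> Leaf ` X \<union> (\<lambda>(s, u). Node s u) ` (?T \<times> ?T)"
  proof
    fix t assume t: "t \<in> tset X (Suc n)"
    show "t \<in> Leaf ` X \<union> (\<lambda>(s, u). Node s u) ` (?T \<times> ?T)"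
    proof (cases t)
      case (Leaf x) then show ?thesis using t by (auto simp: tset_def)
    next
      case (Node s u)
      then have "s \<in> ?T" "u \<in> ?T" using t nleaves_pos[of s] nleaves_pos[of u] by (auto simp: tset_def)
      then show ?thesis using Node by (metis (no_types, lifting) UnI2 case_prod_conv image_eqI mem_Sigma_iff)
    qed
  qed
  have fT: "finite ?T" and cT: "card ?T \<le> tb (card X) n" using Suc by auto
  have fin: "finite (Leaf ` X \<union> (\<lambda>(s, u). Node s u) ` (?T \<times> ?T))" using fT Suc.prems by simp
  have "card (tset X (Suc n)) \<le> card (Leaf ` X \<union> (\<lambda>(s, u). Node s u) ` (?T \<times> ?T))"
    by (rule card_mono[OF fin sub])
  also have "\<dots> \<le> card (Leaf ` X) + card ((\<lambda>(s, u). Node s u) ` (?T \<times> ?T))"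
    by (rule card_Un_le)
  also have "\<dots> \<le> card X + card (?T \<times> ?T)"
    by (intro add_mono card_image_le) (use fT Suc.prems in auto)
  also have "\<dots> = card X + card ?T * card ?T" by (simp add: card_cartesian_product)
  also have "\<dots> \<le> card X + tb (card X) n * tb (card X) n"
    using cT by (intro add_mono mult_mono) auto
  finally show ?case using finite_subset[OF sub fin] by simp
qed

lemma sum_fun_apply: "(sum f A) u = sum (\<lambda>i. f i u) (A :: 'i set)"
proof (induction A rule: infinite_finite_induct)
  case (infinite A) then show ?case by simp
next
  case empty then show ?case by simp
next
  case (insert x F) then show ?case by simp
qed

lemma sum_dlt_apply:
  assumes "finite A"
  shows "(\<Sum>t\<in>A. smul (a t) (dlt t :: 'x ltree \<Rightarrow> 'r::comm_ring_1)) u = (if u \<in> A then a u else 0)"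
proof -
  have "(\<Sum>t\<in>A. smul (a t) (dlt t :: 'x ltree \<Rightarrow> 'r)) u = (\<Sum>t\<in>A. (if u = t then a t else 0))"
    unfolding sum_fun_apply by (intro sum.cong) (auto simp: smul_apply dlt_def)
  also have "\<dots> = (if u \<in> A then a u else 0)" using assms by (simp add: sum.delta)
  finally show ?thesis .
qed

lemma magma_decomp:
  assumes X: "finite X" and x: "x \<in> (magma_alg X :: ('x ltree \<Rightarrow> 'r::comm_ring_1) set)"
  shows "x - (\<Sum>t\<in>tset X c. smul (x t) (dlt t)) \<in> free_lcs X c"
proof -
  define S where "S = {t. x t \<noteq> 0}"
  have fS: "finite S" and SX: "\<And>t. t \<in> S \<Longrightarrow> set_ltree t \<subseteq> X"
    using x unfolding S_def magma_alg_def by auto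
  have fG: "finite (tset X c)" using tset_finite_card[OF X] by blast
  have eq: "x - (\<Sum>t\<in>tset X c. smul (x t) (dlt t)) = (\<Sum>t\<in>S - tset X c. smul (x t) (dlt t))"
  proof (rule ext)
    fix u
    show "(x - (\<Sum>t\<in>tset X c. smul (x t) (dlt t))) u = (\<Sum>t\<in>S - tset X c. smul (x t) (dlt t)) u"
      using fS fG by (simp add: sum_dlt_apply S_def)
  qed
  have "(\<Sum>t\<in>S - tset X c. smul (x t) (dlt t)) \<in> free_lcs X c"
  proof (rule smod_sum[OF free_lcs_smod])
    fix t assume t: "t \<in> S - tset X c"
    then have "set_ltree t \<subseteq> X" "nleaves t > c" using SX by (auto simp: tset_def)
    then have "(dlt t :: 'x ltree \<Rightarrow> 'r) \<in> free_lcs X c" by (rule dlt_in_K)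
    then show "smul (x t) (dlt t) \<in> free_lcs X c" by (rule smod_smul[OF free_lcs_smod])
  qed
  then show ?thesis using eq by simp
qed




section \<open>Saturation and fractions\<close>

definition Ks :: "'r::comm_ring_1 \<Rightarrow> ('a \<Rightarrow> 'r) set \<Rightarrow> ('a \<Rightarrow> 'r) set" where
  "Ks p K = {x. \<exists>t. smul (p ^ t) x \<in> K}"

lemma K_Ks: "K \<subseteq> Ks p K"
  unfolding Ks_def by (auto intro: exI[of _ 0])

lemma Ks_smod:
  assumes K: "smod K"
  shows "smod (Ks p K)"
  unfolding smod_def
proof (intro conjI ballI allI)
  show "0 \<in> Ks p K" using K_Ks smod_zero[OF K] by blast
next
  fix x y assume "x \<in> Ks p K" "y \<in> Ks p K"
  then obtain t1 t2 where t1: "smul (p ^ t1) x \<in> K" and t2: "smul (p ^ t2) y \<in> K"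
    unfolding Ks_def by blast
  have "smul (p ^ (t1 + t2)) (x + y) = smul (p ^ t2) (smul (p ^ t1) x) + smul (p ^ t1) (smul (p ^ t2) y)"
    by (rule ext) (simp add: smul_apply power_add algebra_simps)
  moreover have "\<dots> \<in> K" by (rule smod_add[OF K smod_smul[OF K t1] smod_smul[OF K t2]])
  ultimately have "smul (p ^ (t1 + t2)) (x + y) \<in> K" by simp
  then show "x + y \<in> Ks p K" unfolding Ks_def by blast
next
  fix r x assume "x \<in> Ks p K"
  then obtain t where t: "smul (p ^ t) x \<in> K" unfolding Ks_def by blast
  have "smul (p ^ t) (smul r x) = smul r (smul (p ^ t) x)"
    by (rule ext) (simp add: smul_apply algebra_simps)
  then have "smul (p ^ t) (smul r x) \<in> K" using smod_smul[OF K t, of r] by simp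
  then show "smul r x \<in> Ks p K" unfolding Ks_def by blast
qed

lemma Ks_sat: "smul (p ^ n) x \<in> Ks p K \<Longrightarrow> x \<in> Ks p K"
proof -
  assume "smul (p ^ n) x \<in> Ks p K"
  then obtain t where "smul (p ^ t) (smul (p ^ n) x) \<in> K" unfolding Ks_def by blast
  then have "smul (p ^ (t + n)) x \<in> K" by (simp add: smul_smul power_add)
  then show ?thesis unfolding Ks_def by blast
qed

lemma loc_eq_iff: "loc_eq p K v w \<longleftrightarrow> smul (p ^ fst w) (snd v) - smul (p ^ fst v) (snd w) \<in> Ks p K"
  unfolding loc_eq_def Ks_def by simp

lemma fs_iff: "v \<in> frac_set p K e W \<longleftrightarrow> (\<exists>g\<in>W. smul (p ^ e) (snd v) - smul (p ^ fst v) g \<in> Ks p K)"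
  unfolding frac_set_def loc_eq_iff by simp

lemma fs_loc_eq:
  assumes K: "smod K" and v: "v \<in> frac_set p K e W" and vw: "loc_eq p K w v"
  shows "w \<in> frac_set p K e W"
proof -
  obtain g where g: "g \<in> W" and B: "smul (p ^ e) (snd v) - smul (p ^ fst v) g \<in> Ks p K"
    using v unfolding fs_iff by blast
  have A: "smul (p ^ fst v) (snd w) - smul (p ^ fst w) (snd v) \<in> Ks p K"
    using vw unfolding loc_eq_iff .
  have KS: "smod (Ks p K)" by (rule Ks_smod[OF K])
  have "smul (p ^ fst v) (smul (p ^ e) (snd w) - smul (p ^ fst w) g)
     = smul (p ^ e) (smul (p ^ fst v) (snd w) - smul (p ^ fst w) (snd v))
       + smul (p ^ fst w) (smul (p ^ e) (snd v) - smul (p ^ fst v) g)"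
    by (rule ext) (simp add: smul_apply algebra_simps)
  moreover have "\<dots> \<in> Ks p K" by (rule smod_add[OF KS smod_smul[OF KS A] smod_smul[OF KS B]])
  ultimately have "smul (p ^ e) (snd w) - smul (p ^ fst w) g \<in> Ks p K"
    using Ks_sat by metis
  then show ?thesis using g unfolding fs_iff by blast
qed

lemma fs_mono: "W \<subseteq> W' \<Longrightarrow> frac_set p K e W \<subseteq> frac_set p K e W'"
  unfolding frac_set_def by blast

lemma fs_shift:
  assumes K: "smod K"
  shows "frac_set p K e W = frac_set p K (e + j) (smul (p ^ j) ` W)"
proof
  show "frac_set p K e W \<subseteq> frac_set p K (e + j) (smul (p ^ j) ` W)"
  proof
    fix v assume "v \<in> frac_set p K e W"
    then obtain g where g: "g \<in> W" and B: "smul (p ^ e) (snd v) - smul (p ^ fst v) g \<in> Ks p K"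
      unfolding fs_iff by blast
    have "smul (p ^ (e + j)) (snd v) - smul (p ^ fst v) (smul (p ^ j) g)
        = smul (p ^ j) (smul (p ^ e) (snd v) - smul (p ^ fst v) g)"
      by (rule ext) (simp add: smul_apply power_add algebra_simps)
    also have "\<dots> \<in> Ks p K" using B Ks_smod[OF K] by (rule smod_smul[rotated])
    finally show "v \<in> frac_set p K (e + j) (smul (p ^ j) ` W)"
      using g unfolding fs_iff by blast
  qed
next
  show "frac_set p K (e + j) (smul (p ^ j) ` W) \<subseteq> frac_set p K e W"
  proof
    fix v assume "v \<in> frac_set p K (e + j) (smul (p ^ j) ` W)"
    then obtain g where g: "g \<in> W"
      and B: "smul (p ^ (e + j)) (snd v) - smul (p ^ fst v) (smul (p ^ j) g) \<in> Ks p K"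
      unfolding fs_iff by blast
    have "smul (p ^ (e + j)) (snd v) - smul (p ^ fst v) (smul (p ^ j) g)
        = smul (p ^ j) (smul (p ^ e) (snd v) - smul (p ^ fst v) g)"
      by (rule ext) (simp add: smul_apply power_add algebra_simps)
    then have "smul (p ^ e) (snd v) - smul (p ^ fst v) g \<in> Ks p K" using B Ks_sat by metis
    then show "v \<in> frac_set p K e W" using g unfolding fs_iff by blast
  qed
qed

lemma fs_sum:
  assumes K: "smod K"
  shows "loc_sum p K (frac_set p K e W1) (frac_set p K e W2) = frac_set p K e (ssum W1 W2)"
proof
  have KS: "smod (Ks p K)" by (rule Ks_smod[OF K])
  show "loc_sum p K (frac_set p K e W1) (frac_set p K e W2) \<subseteq> frac_set p K e (ssum W1 W2)"
  proof
    fix v assume "v \<in> loc_sum p K (frac_set p K e W1) (frac_set p K e W2)"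
    then obtain a b where a: "a \<in> frac_set p K e W1" and b: "b \<in> frac_set p K e W2"
      and v: "loc_eq p K v (loc_plus p a b)" unfolding loc_sum_def by blast
    obtain g1 where g1: "g1 \<in> W1" and A: "smul (p ^ e) (snd a) - smul (p ^ fst a) g1 \<in> Ks p K"
      using a unfolding fs_iff by blast
    obtain g2 where g2: "g2 \<in> W2" and B: "smul (p ^ e) (snd b) - smul (p ^ fst b) g2 \<in> Ks p K"
      using b unfolding fs_iff by blast
    have "smul (p ^ e) (snd (loc_plus p a b)) - smul (p ^ fst (loc_plus p a b)) (g1 + g2)
        = smul (p ^ fst b) (smul (p ^ e) (snd a) - smul (p ^ fst a) g1)
          + smul (p ^ fst a) (smul (p ^ e) (snd b) - smul (p ^ fst b) g2)"
      by (rule ext) (simp add: loc_plus_def smul_apply power_add algebra_simps)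
    also have "\<dots> \<in> Ks p K" by (rule smod_add[OF KS smod_smul[OF KS A] smod_smul[OF KS B]])
    finally have "loc_plus p a b \<in> frac_set p K e (ssum W1 W2)"
      using g1 g2 unfolding fs_iff by (blast intro: ssum_mem)
    then show "v \<in> frac_set p K e (ssum W1 W2)" using fs_loc_eq[OF K _ v] by blast
  qed
next
  have KS: "smod (Ks p K)" by (rule Ks_smod[OF K])
  show "frac_set p K e (ssum W1 W2) \<subseteq> loc_sum p K (frac_set p K e W1) (frac_set p K e W2)"
  proof
    fix v assume "v \<in> frac_set p K e (ssum W1 W2)"
    then obtain g where g: "g \<in> ssum W1 W2" and B: "smul (p ^ e) (snd v) - smul (p ^ fst v) g \<in> Ks p K"
      unfolding fs_iff by blast
    obtain g1 g2 where gg: "g = g1 + g2" "g1 \<in> W1" "g2 \<in> W2" using g unfolding ssum_def by blast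
    have z: "0 \<in> Ks p K" using KS by (rule smod_zero)
    have a: "(e, g1) \<in> frac_set p K e W1" unfolding fs_iff using gg(2) z by (intro bexI[of _ g1]) auto
    have b: "(e, g2) \<in> frac_set p K e W2" unfolding fs_iff using gg(3) z by (intro bexI[of _ g2]) auto
    have "smul (p ^ fst (loc_plus p (e, g1) (e, g2))) (snd v) - smul (p ^ fst v) (snd (loc_plus p (e, g1) (e, g2)))
        = smul (p ^ e) (smul (p ^ e) (snd v) - smul (p ^ fst v) g)"
      by (rule ext) (simp add: gg loc_plus_def smul_apply power_add algebra_simps)
    also have "\<dots> \<in> Ks p K" using B KS by (rule smod_smul[rotated])
    finally have "loc_eq p K v (loc_plus p (e, g1) (e, g2))" unfolding loc_eq_iff .
    then show "v \<in> loc_sum p K (frac_set p K e W1) (frac_set p K e W2)"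
      using a b unfolding loc_sum_def by blast
  qed
qed

fun Ws :: "'r::comm_ring_1 \<Rightarrow> (nat \<Rightarrow> ('a \<Rightarrow> 'r) set) \<Rightarrow> nat \<Rightarrow> ('a \<Rightarrow> 'r) set" where
  "Ws p F 0 = {0}"
| "Ws p F (Suc i) = smul p ` ssum (Ws p F i) (F i)"

lemma frac_sum_fs:
  assumes K: "smod K"
  shows "frac_sum p K F n = frac_set p K n (Ws p F n)"
proof (induction n)
  case 0 then show ?case by simp
next
  case (Suc i)
  have "frac_sum p K F (Suc i) = loc_sum p K (frac_set p K i (Ws p F i)) (frac_set p K i (F i))"
    using Suc by simp
  also have "\<dots> = frac_set p K i (ssum (Ws p F i) (F i))" by (rule fs_sum[OF K])
  also have "\<dots> = frac_set p K (i + 1) (smul (p ^ 1) ` ssum (Ws p F i) (F i))" by (rule fs_shift[OF K])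
  finally show ?case by simp
qed

lemma smod_single0: "smod ({0} :: ('a \<Rightarrow> 'r::comm_ring_1) set)"
  by (simp add: smod_def)

lemma Ws_smod: "(\<And>i. smod (F i)) \<Longrightarrow> smod (Ws p F n)"
  by (induction n) (auto intro: image_smul_smod ssum_smod smod_single0)

lemma Ws_sub: "smod W \<Longrightarrow> (\<And>i. F i \<subseteq> W) \<Longrightarrow> Ws p F n \<subseteq> W"
proof (induction n)
  case 0 then show ?case by (simp add: smod_zero)
next
  case (Suc n)
  have "ssum (Ws p F n) (F n) \<subseteq> W" using Suc by (intro ssum_sub) auto
  then show ?case using Suc.prems(1) by (auto intro: smod_smul)
qed

lemma fs_minus_sym:
  assumes K: "smod K" and W: "smod W"
    and "loc_minus p v w \<in> frac_set p K e W"
  shows "loc_minus p w v \<in> frac_set p K e W"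
proof -
  have KS: "smod (Ks p K)" by (rule Ks_smod[OF K])
  obtain g where g: "g \<in> W" and B: "smul (p ^ e) (snd (loc_minus p v w)) - smul (p ^ fst (loc_minus p v w)) g \<in> Ks p K"
    using assms(3) unfolding fs_iff by blast
  have "smul (p ^ e) (snd (loc_minus p w v)) - smul (p ^ fst (loc_minus p w v)) (- g)
      = - (smul (p ^ e) (snd (loc_minus p v w)) - smul (p ^ fst (loc_minus p v w)) g)"
    by (rule ext) (simp add: loc_minus_def smul_apply algebra_simps)
  also have "\<dots> \<in> Ks p K" using B KS by (rule smod_neg[rotated])
  finally show ?thesis using smod_neg[OF W g] unfolding fs_iff by blast
qed

lemma fs_minus_trans:
  assumes K: "smod K" and W: "smod W"
    and vw: "loc_minus p v w \<in> frac_set p K e W" and wu: "loc_minus p w u \<in> frac_set p K e W"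
  shows "loc_minus p v u \<in> frac_set p K e W"
proof -
  have KS: "smod (Ks p K)" by (rule Ks_smod[OF K])
  obtain g1 where g1: "g1 \<in> W" and A: "smul (p ^ e) (snd (loc_minus p v w)) - smul (p ^ fst (loc_minus p v w)) g1 \<in> Ks p K"
    using vw unfolding fs_iff by blast
  obtain g2 where g2: "g2 \<in> W" and B: "smul (p ^ e) (snd (loc_minus p w u)) - smul (p ^ fst (loc_minus p w u)) g2 \<in> Ks p K"
    using wu unfolding fs_iff by blast
  have "smul (p ^ fst w) (smul (p ^ e) (snd (loc_minus p v u)) - smul (p ^ fst (loc_minus p v u)) (g1 + g2))
      = smul (p ^ fst u) (smul (p ^ e) (snd (loc_minus p v w)) - smul (p ^ fst (loc_minus p v w)) g1)
        + smul (p ^ fst v) (smul (p ^ e) (snd (loc_minus p w u)) - smul (p ^ fst (loc_minus p w u)) g2)"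
    by (rule ext) (simp add: loc_minus_def smul_apply power_add algebra_simps)
  also have "\<dots> \<in> Ks p K" by (rule smod_add[OF KS smod_smul[OF KS A] smod_smul[OF KS B]])
  finally have "smul (p ^ e) (snd (loc_minus p v u)) - smul (p ^ fst (loc_minus p v u)) (g1 + g2) \<in> Ks p K"
    using Ks_sat by metis
  then show ?thesis using smod_add[OF W g1 g2] unfolding fs_iff by blast
qed

lemma count_quot:
  assumes fF: "\<And>v. v \<in> A \<Longrightarrow> f v \<in> F" and finF: "finite F"
    and sym: "\<And>v w. P v w \<Longrightarrow> P w v"
    and trans: "\<And>v w u. P v w \<Longrightarrow> P w u \<Longrightarrow> P v u"
    and inj: "\<And>v w. v \<in> A \<Longrightarrow> w \<in> A \<Longrightarrow> f v = f w \<Longrightarrow> P v w"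
  shows "finite (A // {(v, w). v \<in> A \<and> w \<in> A \<and> P v w}) \<and>
         card (A // {(v, w). v \<in> A \<and> w \<in> A \<and> P v w}) \<le> card F"
proof -
  let ?R = "{(v, w). v \<in> A \<and> w \<in> A \<and> P v w}"
  define h where "h = (\<lambda>y. ?R `` {SOME v. v \<in> A \<and> f v = y})"
  have sub: "A // ?R \<subseteq> h ` F"
  proof
    fix C assume "C \<in> A // ?R"
    then obtain v where v: "v \<in> A" and C: "C = ?R `` {v}" unfolding quotient_def by blast
    have ex: "\<exists>v'. v' \<in> A \<and> f v' = f v" using v by blast
    define v' where "v' = (SOME v'. v' \<in> A \<and> f v' = f v)"
    have v': "v' \<in> A" "f v' = f v" using someI_ex[OF ex] unfolding v'_def by auto
    have P1: "P v' v" using inj[OF v'(1) v v'(2)] .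
    have P2: "P v v'" using sym[OF P1] .
    have "?R `` {v} = ?R `` {v'}"
    proof (rule set_eqI)
      fix z
      show "z \<in> ?R `` {v} \<longleftrightarrow> z \<in> ?R `` {v'}"
        using trans[OF P2, of z] trans[OF P1, of z] v v' by auto
    qed
    then have "C = h (f v)" unfolding h_def C v'_def by simp
    then show "C \<in> h ` F" using fF[OF v] by blast
  qed
  have "finite (h ` F)" using finF by simp
  moreover have "card (h ` F) \<le> card F" using finF by (rule card_image_le)
  moreover have "finite (A // ?R)" using finite_subset[OF sub] \<open>finite (h ` F)\<close> .
  moreover have "card (A // ?R) \<le> card (h ` F)" by (rule card_mono[OF \<open>finite (h ` F)\<close> sub])
  ultimately show ?thesis by simp
qed




declare plus_fun_apply [simp del] zero_fun_apply [simp del]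

definition lincomb :: "'r::comm_ring_1 list \<Rightarrow> ('a \<Rightarrow> 'r) list \<Rightarrow> ('a \<Rightarrow> 'r)" where
  "lincomb as gs = sum_list (map (\<lambda>(a, g). smul a g) (zip as gs))"

lemma lincomb_Nil1 [simp]: "lincomb [] gs = 0" by (simp add: lincomb_def)
lemma lincomb_Nil2 [simp]: "lincomb as [] = 0" by (simp add: lincomb_def)
lemma lincomb_Cons [simp]: "lincomb (a # as) (g # gs) = smul a g + lincomb as gs"
  by (simp add: lincomb_def)

definition SP :: "('a \<Rightarrow> 'r::comm_ring_1) set \<Rightarrow> ('a \<Rightarrow> 'r) list \<Rightarrow> ('a \<Rightarrow> 'r) set" where
  "SP K gs = {x. \<exists>as. length as = length gs \<and> x - lincomb as gs \<in> K}"

lemma lincomb_add: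
  "length as = length gs \<Longrightarrow> length bs = length gs \<Longrightarrow>
   lincomb as gs + lincomb bs gs = lincomb (map2 (+) as bs) (gs :: ('a \<Rightarrow> 'r::comm_ring_1) list)"
proof (induction gs arbitrary: as bs)
  case Nil then show ?case by simp
next
  case (Cons g gs)
  then obtain a as' b bs' where "as = a # as'" "bs = b # bs'" "length as' = length gs" "length bs' = length gs"
    by (metis length_Suc_conv)
  then show ?case using Cons.IH by (simp add: smul_addl algebra_simps)
qed

lemma lincomb_smul: "smul r (lincomb as gs) = lincomb (map ((*) r) as) (gs :: ('a \<Rightarrow> 'r::comm_ring_1) list)"
proof (induction gs arbitrary: as)
  case Nil then show ?case by simp
next
  case (Cons g gs)
  then show ?case by (cases as) (simp_all add: smul_add smul_smul)
qed

lemma lincomb_zero: "lincomb (replicate n 0) (gs :: ('a \<Rightarrow> 'r::comm_ring_1) list) = 0"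
proof (induction gs arbitrary: n)
  case Nil then show ?case by simp
next
  case (Cons g gs) then show ?case by (cases n) simp_all
qed

lemma lincomb_in: "smod W \<Longrightarrow> set gs \<subseteq> W \<Longrightarrow> lincomb as gs \<in> W"
proof (induction gs arbitrary: as)
  case Nil then show ?case by (simp add: smod_zero)
next
  case (Cons g gs) then show ?case
    by (cases as) (simp_all add: smod_zero smod_add smod_smul)
qed

lemma SP_smod:
  assumes K: "smod K"
  shows "smod (SP K gs)"
  unfolding smod_def
proof (intro conjI ballI allI)
  show "0 \<in> SP K gs" unfolding SP_def
    using smod_zero[OF K] by (intro CollectI exI[of _ "replicate (length gs) 0"]) (simp add: lincomb_zero)
next
  fix x y assume "x \<in> SP K gs" "y \<in> SP K gs"
  then obtain as bs where a: "length as = length gs" "x - lincomb as gs \<in> K"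
    and b: "length bs = length gs" "y - lincomb bs gs \<in> K" unfolding SP_def by blast
  have eq: "(x + y) - lincomb (map2 (+) as bs) gs = (x - lincomb as gs) + (y - lincomb bs gs)"
    using lincomb_add[OF a(1) b(1)] by (simp add: algebra_simps)
  have "(x + y) - lincomb (map2 (+) as bs) gs \<in> K" unfolding eq by (rule smod_add[OF K a(2) b(2)])
  moreover have "length (map2 (+) as bs) = length gs" using a b by simp
  ultimately show "x + y \<in> SP K gs" unfolding SP_def by blast
next
  fix r x assume "x \<in> SP K gs"
  then obtain as where a: "length as = length gs" "x - lincomb as gs \<in> K" unfolding SP_def by blast
  have eq: "smul r x - lincomb (map ((*) r) as) gs = smul r (x - lincomb as gs)"
    by (simp add: smul_diff lincomb_smul)
  have "smul r x - lincomb (map ((*) r) as) gs \<in> K" unfolding eq by (rule smod_smul[OF K a(2)])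
  then show "smul r x \<in> SP K gs" unfolding SP_def using a(1) by (intro CollectI exI[of _ "map ((*) r) as"]) simp
qed

lemma K_SP: "K \<subseteq> SP K gs"
  unfolding SP_def by (auto intro!: exI[of _ "replicate (length gs) 0"] simp: lincomb_zero)

lemma SP_Cons: "x \<in> SP K (g # gs) \<Longrightarrow> \<exists>a. x - smul a g \<in> SP K gs"
proof -
  assume "x \<in> SP K (g # gs)"
  then obtain as where "length as = Suc (length gs)" "x - lincomb as (g # gs) \<in> K" unfolding SP_def by auto
  then obtain a as' where "as = a # as'" "length as' = length gs" "x - (smul a g + lincomb as' gs) \<in> K"
    by (metis length_Suc_conv lincomb_Cons)
  then have "x - smul a g - lincomb as' gs \<in> K" "length as' = length gs" by (simp_all add: algebra_simps)
  then show ?thesis unfolding SP_def by blast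
qed

section \<open>Finitely generated submodules over the p-adic integers\<close>

lemma gen_lemma:
  fixes gs :: "('a \<Rightarrow> 'p::card2 padic_int) list"
  assumes pr: "prime CARD('p)" and K: "smod K" and J: "smod J" and KJ: "K \<subseteq> J" and JS: "J \<subseteq> SP K gs"
  shows "\<exists>ys. length ys = length gs \<and> set ys \<subseteq> J \<and> J \<subseteq> SP K ys"
  using J KJ JS
proof (induction gs arbitrary: J)
  case Nil then show ?case by simp
next
  case (Cons g gs)
  have SPs: "smod (SP K gs)" by (rule SP_smod[OF K])
  define A where "A = {a. \<exists>x\<in>J. x - smul a g \<in> SP K gs}"
  have A0: "0 \<in> A" unfolding A_def using smod_zero[OF Cons.prems(1)] smod_zero[OF SPs] by force
  have Aadd: "a + b \<in> A" if ab: "a \<in> A" "b \<in> A" for a b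
  proof -
    obtain x y where x: "x \<in> J" "x - smul a g \<in> SP K gs" and y: "y \<in> J" "y - smul b g \<in> SP K gs"
      using ab unfolding A_def by blast
    have eq: "(x + y) - smul (a + b) g = (x - smul a g) + (y - smul b g)" by (simp add: smul_addl algebra_simps)
    have "(x + y) - smul (a + b) g \<in> SP K gs" unfolding eq by (rule smod_add[OF SPs x(2) y(2)])
    then show ?thesis unfolding A_def using smod_add[OF Cons.prems(1) x(1) y(1)] by blast
  qed
  have Amul: "r * a \<in> A" if ab: "a \<in> A" for r a
  proof -
    obtain x where x: "x \<in> J" "x - smul a g \<in> SP K gs" using ab unfolding A_def by blast
    have "smul r x - smul (r * a) g = smul r (x - smul a g)" by (simp add: smul_diff smul_smul)
    then have "smul r x - smul (r * a) g \<in> SP K gs" using smod_smul[OF SPs x(2)] by simp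
    then show ?thesis unfolding A_def using smod_smul[OF Cons.prems(1) x(1)] by blast
  qed
  obtain a0 where a0: "a0 \<in> A" and gen: "\<And>b. b \<in> A \<Longrightarrow> \<exists>l. b = l * a0"
    using principal_ideal[OF pr A0 Aadd Amul] by blast
  obtain x0 where x0: "x0 \<in> J" "x0 - smul a0 g \<in> SP K gs" using a0 unfolding A_def by blast
  define J' where "J' = J \<inter> SP K gs"
  have J'm: "smod J'" unfolding J'_def using Cons.prems(1) SPs by (auto simp: smod_def)
  have KJ': "K \<subseteq> J'" unfolding J'_def using Cons.prems(2) K_SP by blast
  have J'S: "J' \<subseteq> SP K gs" unfolding J'_def by blast
  obtain ys' where ys': "length ys' = length gs" "set ys' \<subseteq> J'" "J' \<subseteq> SP K ys'"
    using Cons.IH[OF J'm KJ' J'S] by blast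
  show ?case
  proof (intro exI[of _ "x0 # ys'"] conjI)
    show "length (x0 # ys') = length (g # gs)" using ys' by simp
    show "set (x0 # ys') \<subseteq> J" using ys' x0 unfolding J'_def by auto
    show "J \<subseteq> SP K (x0 # ys')"
    proof
      fix x assume x: "x \<in> J"
      then obtain a where a: "x - smul a g \<in> SP K gs" using SP_Cons Cons.prems(3) by blast
      then have "a \<in> A" unfolding A_def using x by blast
      then obtain l where l: "a = l * a0" using gen by blast
      define z where "z = x - smul l x0"
      have zJ: "z \<in> J" unfolding z_def using smod_diff[OF Cons.prems(1) x smod_smul[OF Cons.prems(1) x0(1)]] .
      have "z = (x - smul a g) - smul l (x0 - smul a0 g)"
        unfolding z_def l by (simp add: smul_diff smul_smul)
      then have "z \<in> SP K gs" using smod_diff[OF SPs a smod_smul[OF SPs x0(2)]] by simp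
      then have "z \<in> J'" using zJ unfolding J'_def by blast
      then obtain bs where bs: "length bs = length ys'" "z - lincomb bs ys' \<in> K"
        using ys'(3) unfolding SP_def by blast
      have eq: "x - lincomb (l # bs) (x0 # ys') = z - lincomb bs ys'" unfolding z_def by simp
      have "x - lincomb (l # bs) (x0 # ys') \<in> K" unfolding eq by (rule bs(2))
      then show "x \<in> SP K (x0 # ys')" unfolding SP_def using bs(1)
        by (intro CollectI exI[of _ "l # bs"]) simp
    qed
  qed
qed

lemma coeff_reduce:
  fixes as bs :: "'p::card2 padic_int list"
  assumes "length as = length ys" "length bs = length ys"
    and "map (\<lambda>a. rep a e) as = map (\<lambda>a. rep a e) bs"
  shows "\<exists>cs. length cs = length ys \<and> lincomb as ys - lincomb bs ys = smul (padic_p ^ e) (lincomb cs ys)"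
  using assms
proof (induction ys arbitrary: as bs)
  case Nil then show ?case by simp
next
  case (Cons y ys)
  obtain a as' where a: "as = a # as'" "length as' = length ys" using Cons.prems(1) by (metis length_Suc_conv)
  obtain b bs' where b: "bs = b # bs'" "length bs' = length ys" using Cons.prems(2) by (metis length_Suc_conv)
  have ra: "rep a e = rep b e" and rm: "map (\<lambda>a. rep a e) as' = map (\<lambda>a. rep a e) bs'"
    using Cons.prems(3) a b by auto
  obtain cs where cs: "length cs = length ys" "lincomb as' ys - lincomb bs' ys = smul (padic_p ^ e) (lincomb cs ys)"
    using Cons.IH[OF a(2) b(2) rm] by blast
  have "rep (a - b) e = 0" using ra by (simp add: rep_diff)
  then obtain c where c: "a - b = padic_p ^ e * c" using rep_zero_div by blast
  have "lincomb as (y # ys) - lincomb bs (y # ys) = smul (a - b) y + (lincomb as' ys - lincomb bs' ys)"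
    unfolding a b by (rule ext) (simp add: smul_apply plus_fun_apply algebra_simps)
  also have "\<dots> = smul (padic_p ^ e) (lincomb (c # cs) (y # ys))"
    unfolding c cs(2) by (simp add: smul_add smul_smul)
  finally show ?case using cs(1) by (intro exI[of _ "c # cs"]) simp
qed

definition cf :: "nat \<Rightarrow> ('a \<Rightarrow> 'p::card2 padic_int) set \<Rightarrow> ('a \<Rightarrow> 'p padic_int) list \<Rightarrow> ('a \<Rightarrow> 'p padic_int) \<Rightarrow> int list" where
  "cf e K ys x = map (\<lambda>a. rep a e) (SOME as. length as = length ys \<and> x - lincomb as ys \<in> K)"

definition Fset :: "int \<Rightarrow> nat \<Rightarrow> nat \<Rightarrow> int list set" where
  "Fset P e r = {l. set l \<subseteq> {0..<P ^ e} \<and> length l = r}"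

lemma Fset_finite: "finite (Fset P e r)"
  unfolding Fset_def by (rule finite_lists_length_eq) simp

lemma Fset_card: "P \<ge> 0 \<Longrightarrow> card (Fset P e r) = nat (P ^ e) ^ r"
  unfolding Fset_def by (subst card_lists_length_eq) simp_all

lemma cf_range:
  assumes "x \<in> SP K ys"
  shows "cf e K ys (x :: 'a \<Rightarrow> 'p::card2 padic_int) \<in> Fset (int CARD('p)) e (length ys)"
proof -
  have ex: "\<exists>as. length as = length ys \<and> x - lincomb as ys \<in> K" using assms unfolding SP_def by blast
  have "length (SOME as. length as = length ys \<and> x - lincomb as ys \<in> K) = length ys"
    using someI_ex[OF ex] by blast
  then show ?thesis unfolding cf_def Fset_def by (auto simp: rep_range)
qed

lemma cf_eq:
  assumes K: "smod K" and x: "x \<in> SP K ys" and y: "y \<in> SP K ys"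
    and e: "cf e K ys x = cf e K ys (y :: 'a \<Rightarrow> 'p::card2 padic_int)"
  shows "\<exists>cs. length cs = length ys \<and> x - y - smul (padic_p ^ e) (lincomb cs ys) \<in> K"
proof -
  define ax where "ax = (SOME as. length as = length ys \<and> x - lincomb as ys \<in> K)"
  define ay where "ay = (SOME as. length as = length ys \<and> y - lincomb as ys \<in> K)"
  have exx: "\<exists>as. length as = length ys \<and> x - lincomb as ys \<in> K" using x unfolding SP_def by blast
  have exy: "\<exists>as. length as = length ys \<and> y - lincomb as ys \<in> K" using y unfolding SP_def by blast
  have ax: "length ax = length ys" "x - lincomb ax ys \<in> K" using someI_ex[OF exx] unfolding ax_def by auto
  have ay: "length ay = length ys" "y - lincomb ay ys \<in> K" using someI_ex[OF exy] unfolding ay_def by auto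
  have "map (\<lambda>a. rep a e) ax = map (\<lambda>a. rep a e) ay" using e unfolding cf_def ax_def ay_def .
  then obtain cs where cs: "length cs = length ys"
    "lincomb ax ys - lincomb ay ys = smul (padic_p ^ e) (lincomb cs ys)"
    using coeff_reduce[OF ax(1) ay(1)] by blast
  have eq: "x - y - smul (padic_p ^ e) (lincomb cs ys) = (x - lincomb ax ys) - (y - lincomb ay ys)"
    using cs(2) by (simp add: algebra_simps)
  have "x - y - smul (padic_p ^ e) (lincomb cs ys) \<in> K" unfolding eq by (rule smod_diff[OF K ax(2) ay(2)])
  then show ?thesis using cs(1) by blast
qed




declare plus_fun_apply [simp del] zero_fun_apply [simp del]

lemma lc_ideal_smod: "is_lc_ideal X c I \<Longrightarrow> smod I"
  unfolding is_lc_ideal_def smod_def by blast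

lemma lc_comm_sub:
  assumes I: "is_lc_ideal X c I"
  shows "lc_comm X c I i \<subseteq> I"
proof (induction i)
  case 0 then show ?case by simp
next
  case (Suc i)
  have Im: "smod I" by (rule lc_ideal_smod[OF I])
  have "brs (lc_comm X c I i) (magma_alg X) \<subseteq> I"
    using Suc I unfolding is_lc_ideal_def by (intro brs_sub[OF Im]) blast
  moreover have "nil_rel X c \<subseteq> I" using I unfolding is_lc_ideal_def by blast
  ultimately show ?case by (simp add: ssum_sub[OF Im])
qed

lemma lc_comm_smod:
  assumes I: "is_lc_ideal X c I"
  shows "smod (lc_comm X c I i)"
  by (cases i) (simp_all add: lc_ideal_smod[OF I] ssum_smod brs_smod free_lcs_smod)

lemma lc_lcs_sub: "lc_lcs X c i \<subseteq> (magma_alg X :: ('x ltree \<Rightarrow> 'r::comm_ring_1) set)"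
proof (induction i)
  case 0 then show ?case by simp
next
  case (Suc i)
  have "brs (lc_lcs X c i) (magma_alg X) \<subseteq> (magma_alg X :: ('x ltree \<Rightarrow> 'r) set)"
    using Suc by (intro brs_sub[OF magma_smod]) (auto intro: br_magma)
  then show ?case by (simp add: ssum_sub[OF magma_smod] free_lcs_magma)
qed

lemma lc_lcs_smod: "smod (lc_lcs X c i :: ('x ltree \<Rightarrow> 'r::comm_ring_1) set)"
  by (cases i) (simp_all add: magma_smod ssum_smod brs_smod free_lcs_smod)

lemma lincomb_map_map:
  "lincomb (map f l) (map g l) = sum_list (map (\<lambda>t. smul (f t) (g t)) l)"
  by (induction l) simp_all

lemma magma_SP:
  assumes X: "finite X" and gl: "set gl = tset X c" "distinct gl"
  shows "magma_alg X \<subseteq> SP (free_lcs X c) (map dlt gl :: ('x ltree \<Rightarrow> 'r::comm_ring_1) list)"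
proof
  fix x :: "'x ltree \<Rightarrow> 'r" assume x: "x \<in> magma_alg X"
  have "lincomb (map x gl) (map dlt gl) = sum_list (map (\<lambda>t. smul (x t) (dlt t)) gl)"
    by (rule lincomb_map_map)
  also have "\<dots> = (\<Sum>t\<in>tset X c. smul (x t) (dlt t))"
    unfolding gl(1)[symmetric] by (rule sum.distinct_set_conv_list[OF gl(2), symmetric])
  finally have "x - lincomb (map x gl) (map dlt gl) \<in> free_lcs X c"
    using magma_decomp[OF X x, of c] by simp
  then show "x \<in> SP (free_lcs X c) (map dlt gl)" unfolding SP_def
    by (intro CollectI exI[of _ "map x gl"]) simp
qed

lemma dlt_list_magma: "set gl \<subseteq> tset X c \<Longrightarrow> set (map dlt gl) \<subseteq> (magma_alg X :: ('x ltree \<Rightarrow> 'r::comm_ring_1) set)"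
  by (auto simp: tset_def intro: dlt_magma)

lemma Fset_bound:
  assumes "r \<le> tb d c"
  shows "card (Fset (int CARD('p::card2)) c r) \<le> (CARD('p) ^ c) ^ tb d c"
proof -
  have "card (Fset (int CARD('p)) c r) = (CARD('p) ^ c) ^ r"
    by (simp add: Fset_card nat_power_eq)
  also have "\<dots> \<le> (CARD('p) ^ c) ^ tb d c"
    using assms by (intro power_increasing) simp_all
  finally show ?thesis .
qed




declare plus_fun_apply [simp del] zero_fun_apply [simp del]

lemma common_setup:
  assumes X: "finite X"
  obtains gs :: "('x ltree \<Rightarrow> 'p::card2 padic_int) list" where
    "magma_alg X \<subseteq> SP (free_lcs X c) gs" "set gs \<subseteq> magma_alg X" "length gs \<le> tb (card X) c"
proof -
  have fin: "finite (tset X c)" and cd: "card (tset X c) \<le> tb (card X) c"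
    using tset_finite_card[OF X, of c] by auto
  obtain gl where gl: "set gl = tset X c" "distinct gl"
    using finite_distinct_list[OF fin] by blast
  define gs where "gs = (map dlt gl :: ('x ltree \<Rightarrow> 'p padic_int) list)"
  have a: "magma_alg X \<subseteq> SP (free_lcs X c) gs" unfolding gs_def by (rule magma_SP[OF X gl])
  have b: "set gs \<subseteq> magma_alg X" unfolding gs_def by (rule dlt_list_magma[of gl X c]) (simp add: gl(1))
  have "length gs = card (set gl)" unfolding gs_def using distinct_card[OF gl(2)] by simp
  then have c: "length gs \<le> tb (card X) c" using cd gl(1) by simp
  show ?thesis by (rule that[OF a b c])
qed

lemma part_b:
  fixes I :: "('x ltree \<Rightarrow> 'p::card2 padic_int) set"
  assumes X: "finite X" and I: "is_lc_ideal X c I"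
  defines "p \<equiv> (padic_p :: 'p padic_int)" and "K \<equiv> nil_rel X c"
  defines "L \<equiv> frac_set p K 0 (magma_alg X)"
    and "Ihat \<equiv> frac_sum p K (lc_comm X c I) c"
    and "Lhat \<equiv> frac_sum p K (lc_lcs X c) c"
  shows "finite (loc_cosets p K Lhat (loc_sum p K L Ihat)) \<and>
         card (loc_cosets p K Lhat (loc_sum p K L Ihat)) \<le> (CARD('p) ^ c) ^ tb (card X) c"
proof -
  define M where "M = (magma_alg X :: ('x ltree \<Rightarrow> 'p padic_int) set)"
  have Kmod: "smod K" unfolding K_def by (rule free_lcs_smod)
  have KS: "smod (Ks p K)" by (rule Ks_smod[OF Kmod])
  have Mmod: "smod M" unfolding M_def by (rule magma_smod)
  obtain gs :: "('x ltree \<Rightarrow> 'p padic_int) list" where MSP: "M \<subseteq> SP K gs" and gsM: "set gs \<subseteq> M"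
    and lgs: "length gs \<le> tb (card X) c"
    using common_setup[OF X] unfolding M_def K_def by blast
  define Wl where "Wl = Ws p (lc_comm X c I) c"
  define Wm where "Wm = Ws p (lc_lcs X c) c"
  have Ihat: "Ihat = frac_set p K c Wl" unfolding Ihat_def Wl_def by (rule frac_sum_fs[OF Kmod])
  have Lhat: "Lhat = frac_set p K c Wm" unfolding Lhat_def Wm_def by (rule frac_sum_fs[OF Kmod])
  have Wlm: "smod Wl" unfolding Wl_def by (rule Ws_smod[OF lc_comm_smod[OF I]])
  have WmM: "Wm \<subseteq> M" unfolding Wm_def M_def by (rule Ws_sub[OF magma_smod lc_lcs_sub])
  have L0: "L = frac_set p K c (smul (p ^ c) ` M)"
    using fs_shift[OF Kmod, of p 0 M c] unfolding L_def M_def by simp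
  define W' where "W' = ssum (smul (p ^ c) ` M) Wl"
  have W'm: "smod W'" unfolding W'_def by (rule ssum_smod[OF image_smul_smod[OF Mmod] Wlm])
  have Bset: "loc_sum p K L Ihat = frac_set p K c W'" unfolding L0 Ihat W'_def by (rule fs_sum[OF Kmod])
  have LB: "L \<subseteq> loc_sum p K L Ihat"
  proof
    fix u assume u: "u \<in> L"
    have "smul (p ^ c) (snd (0::nat, 0)) - smul (p ^ fst (0::nat, 0)) 0 = (0 :: 'x ltree \<Rightarrow> 'p padic_int)"
      by simp
    then have z: "(0, 0) \<in> Ihat" unfolding Ihat fs_iff using smod_zero[OF Wlm] smod_zero[OF KS] by metis
    have e1: "loc_plus p u (0, 0) = u" by (cases u) (simp add: loc_plus_def)
    have "loc_eq p K u u" unfolding loc_eq_iff using smod_zero[OF KS] by simp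
    then have "loc_eq p K u (loc_plus p u (0, 0))" unfolding e1 .
    then show "u \<in> loc_sum p K L Ihat" unfolding loc_sum_def using u z by blast
  qed
  define sv where "sv = (\<lambda>v. SOME s. s \<in> M \<and> smul (p ^ c) (snd v) - smul (p ^ fst v) s \<in> Ks p K)"
  have sv: "sv v \<in> M \<and> smul (p ^ c) (snd v) - smul (p ^ fst v) (sv v) \<in> Ks p K" if "v \<in> Lhat" for v
  proof -
    have "v \<in> frac_set p K c M" using that fs_mono[OF WmM] unfolding Lhat by blast
    then have "\<exists>s. s \<in> M \<and> smul (p ^ c) (snd v) - smul (p ^ fst v) s \<in> Ks p K" unfolding fs_iff by blast
    then show ?thesis unfolding sv_def by (rule someI_ex)
  qed
  define f where "f = (\<lambda>v. cf c K gs (sv v))"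
  have main: "finite (Lhat // {(v, w). v \<in> Lhat \<and> w \<in> Lhat \<and> loc_minus p v w \<in> loc_sum p K L Ihat}) \<and>
     card (Lhat // {(v, w). v \<in> Lhat \<and> w \<in> Lhat \<and> loc_minus p v w \<in> loc_sum p K L Ihat})
       \<le> card (Fset (int CARD('p)) c (length gs))"
  proof (rule count_quot[where f = f and P = "\<lambda>v w. loc_minus p v w \<in> loc_sum p K L Ihat"])
    show "f v \<in> Fset (int CARD('p)) c (length gs)" if "v \<in> Lhat" for v
      unfolding f_def using sv[OF that] MSP by (intro cf_range) blast
    show "finite (Fset (int CARD('p)) c (length gs))" by (rule Fset_finite)
    show "loc_minus p w v \<in> loc_sum p K L Ihat" if "loc_minus p v w \<in> loc_sum p K L Ihat" for v w
      using that unfolding Bset by (rule fs_minus_sym[OF Kmod W'm])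
    show "loc_minus p v u \<in> loc_sum p K L Ihat"
      if "loc_minus p v w \<in> loc_sum p K L Ihat" "loc_minus p w u \<in> loc_sum p K L Ihat" for v w u
      using that unfolding Bset by (rule fs_minus_trans[OF Kmod W'm])
    show "loc_minus p v w \<in> loc_sum p K L Ihat" if v: "v \<in> Lhat" and w: "w \<in> Lhat" and e: "f v = f w" for v w
    proof -
      have svM: "sv v \<in> SP K gs" "sv w \<in> SP K gs" using sv[OF v] sv[OF w] MSP by blast+
      obtain cs where cs: "length cs = length gs" "sv v - sv w - smul (padic_p ^ c) (lincomb cs gs) \<in> K"
        using cf_eq[OF Kmod svM e[unfolded f_def]] by blast
      define z where "z = lincomb cs gs"
      have zM: "z \<in> M" unfolding z_def by (rule lincomb_in[OF Mmod gsM])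
      have Sv: "smul (p ^ c) (snd v) - smul (p ^ fst v) (sv v) \<in> Ks p K" using sv[OF v] by blast
      have Sw: "smul (p ^ c) (snd w) - smul (p ^ fst w) (sv w) \<in> Ks p K" using sv[OF w] by blast
      have Q: "sv v - sv w - smul (p ^ c) z \<in> Ks p K" using cs(2) K_Ks unfolding z_def p_def by blast
      have id: "smul (p ^ c) (smul (p ^ 0) (snd (loc_minus p v w)) - smul (p ^ fst (loc_minus p v w)) z)
         = smul (p ^ fst w) (smul (p ^ c) (snd v) - smul (p ^ fst v) (sv v))
           - smul (p ^ fst v) (smul (p ^ c) (snd w) - smul (p ^ fst w) (sv w))
           + smul (p ^ (fst v + fst w)) (sv v - sv w - smul (p ^ c) z)"
        by (rule ext) (simp add: loc_minus_def smul_apply plus_fun_apply power_add algebra_simps)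
      have "smul (p ^ c) (smul (p ^ 0) (snd (loc_minus p v w)) - smul (p ^ fst (loc_minus p v w)) z) \<in> Ks p K"
        unfolding id
        by (rule smod_add[OF KS smod_diff[OF KS smod_smul[OF KS Sv] smod_smul[OF KS Sw]] smod_smul[OF KS Q]])
      then have "smul (p ^ 0) (snd (loc_minus p v w)) - smul (p ^ fst (loc_minus p v w)) z \<in> Ks p K"
        by (rule Ks_sat)
      then have "loc_minus p v w \<in> L" unfolding L_def fs_iff using zM unfolding M_def by blast
      then show ?thesis using LB by blast
    qed
  qed
  moreover have "card (Fset (int CARD('p)) c (length gs)) \<le> (CARD('p) ^ c) ^ tb (card X) c"
    by (rule Fset_bound[OF lgs])
  ultimately show ?thesis unfolding loc_cosets_def by linarith
qed

lemma part_a: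
  fixes I :: "('x ltree \<Rightarrow> 'p::card2 padic_int) set"
  assumes pr: "prime CARD('p)" and X: "finite X" and I: "is_lc_ideal X c I"
  defines "p \<equiv> (padic_p :: 'p padic_int)" and "K \<equiv> nil_rel X c"
  defines "L \<equiv> frac_set p K 0 (magma_alg X)"
    and "Iimg \<equiv> frac_set p K 0 I"
    and "Ihat \<equiv> frac_sum p K (lc_comm X c I) c"
  shows "finite (loc_cosets p K (L \<inter> Ihat) Iimg) \<and>
         card (loc_cosets p K (L \<inter> Ihat) Iimg) \<le> (CARD('p) ^ c) ^ tb (card X) c"
proof -
  define M where "M = (magma_alg X :: ('x ltree \<Rightarrow> 'p padic_int) set)"
  have Kmod: "smod K" unfolding K_def by (rule free_lcs_smod)
  have KS: "smod (Ks p K)" by (rule Ks_smod[OF Kmod])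
  have Imod: "smod I" by (rule lc_ideal_smod[OF I])
  have KI: "K \<subseteq> I" and IM: "I \<subseteq> M" using I unfolding is_lc_ideal_def K_def M_def by blast+
  obtain gs :: "('x ltree \<Rightarrow> 'p padic_int) list" where MSP: "M \<subseteq> SP K gs"
    and lgs: "length gs \<le> tb (card X) c"
    using common_setup[OF X] unfolding M_def K_def by blast
  obtain ys where ys: "length ys = length gs" "set ys \<subseteq> I" "I \<subseteq> SP K ys"
    using gen_lemma[OF pr Kmod Imod KI] IM MSP by blast
  define Wl where "Wl = Ws p (lc_comm X c I) c"
  have Ihat: "Ihat = frac_set p K c Wl" unfolding Ihat_def Wl_def by (rule frac_sum_fs[OF Kmod])
  have WlI: "Wl \<subseteq> I" unfolding Wl_def by (rule Ws_sub[OF Imod lc_comm_sub[OF I]])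
  define yv where "yv = (\<lambda>v. SOME y. y \<in> I \<and> smul (p ^ c) (snd v) - smul (p ^ fst v) y \<in> Ks p K)"
  have yv: "yv v \<in> I \<and> smul (p ^ c) (snd v) - smul (p ^ fst v) (yv v) \<in> Ks p K" if "v \<in> Ihat" for v
  proof -
    have "v \<in> frac_set p K c I" using that fs_mono[OF WlI] unfolding Ihat by blast
    then have "\<exists>y. y \<in> I \<and> smul (p ^ c) (snd v) - smul (p ^ fst v) y \<in> Ks p K" unfolding fs_iff by blast
    then show ?thesis unfolding yv_def by (rule someI_ex)
  qed
  define f where "f = (\<lambda>v. cf c K ys (yv v))"
  have main: "finite ((L \<inter> Ihat) // {(v, w). v \<in> L \<inter> Ihat \<and> w \<in> L \<inter> Ihat \<and> loc_minus p v w \<in> Iimg}) \<and>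
     card ((L \<inter> Ihat) // {(v, w). v \<in> L \<inter> Ihat \<and> w \<in> L \<inter> Ihat \<and> loc_minus p v w \<in> Iimg})
       \<le> card (Fset (int CARD('p)) c (length ys))"
  proof (rule count_quot[where f = f and P = "\<lambda>v w. loc_minus p v w \<in> Iimg"])
    show "f v \<in> Fset (int CARD('p)) c (length ys)" if "v \<in> L \<inter> Ihat" for v
      unfolding f_def using yv[of v] that ys(3) by (intro cf_range) blast
    show "finite (Fset (int CARD('p)) c (length ys))" by (rule Fset_finite)
    show "loc_minus p w v \<in> Iimg" if "loc_minus p v w \<in> Iimg" for v w
      using that unfolding Iimg_def by (rule fs_minus_sym[OF Kmod Imod])
    show "loc_minus p v u \<in> Iimg" if "loc_minus p v w \<in> Iimg" "loc_minus p w u \<in> Iimg" for v w u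
      using that unfolding Iimg_def by (rule fs_minus_trans[OF Kmod Imod])
    show "loc_minus p v w \<in> Iimg" if v: "v \<in> L \<inter> Ihat" and w: "w \<in> L \<inter> Ihat" and e: "f v = f w" for v w
    proof -
      have yvS: "yv v \<in> SP K ys" "yv w \<in> SP K ys" using yv[of v] yv[of w] v w ys(3) by blast+
      obtain cs where cs: "length cs = length ys" "yv v - yv w - smul (padic_p ^ c) (lincomb cs ys) \<in> K"
        using cf_eq[OF Kmod yvS e[unfolded f_def]] by blast
      define z where "z = lincomb cs ys"
      have zI: "z \<in> I" unfolding z_def by (rule lincomb_in[OF Imod ys(2)])
      obtain sv where svM: "sv \<in> magma_alg X" and Tv: "smul (p ^ 0) (snd v) - smul (p ^ fst v) sv \<in> Ks p K"
        using IntD1[OF v] unfolding L_def fs_iff by blast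
      obtain sw where swM: "sw \<in> magma_alg X" and Tw: "smul (p ^ 0) (snd w) - smul (p ^ fst w) sw \<in> Ks p K"
        using IntD1[OF w] unfolding L_def fs_iff by blast
      have Uv: "smul (p ^ c) (snd v) - smul (p ^ fst v) (yv v) \<in> Ks p K" using yv[of v] v by blast
      have Uw: "smul (p ^ c) (snd w) - smul (p ^ fst w) (yv w) \<in> Ks p K" using yv[of w] w by blast
      have idv: "smul (p ^ fst v) (smul (p ^ c) sv - yv v)
          = (smul (p ^ c) (snd v) - smul (p ^ fst v) (yv v)) - smul (p ^ c) (smul (p ^ 0) (snd v) - smul (p ^ fst v) sv)"
        by (rule ext) (simp add: smul_apply plus_fun_apply algebra_simps)
      have Vv: "smul (p ^ c) sv - yv v \<in> Ks p K"
        by (rule Ks_sat[where n = "fst v"]) (unfold idv, rule smod_diff[OF KS Uv smod_smul[OF KS Tv]])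
      have idw: "smul (p ^ fst w) (smul (p ^ c) sw - yv w)
          = (smul (p ^ c) (snd w) - smul (p ^ fst w) (yv w)) - smul (p ^ c) (smul (p ^ 0) (snd w) - smul (p ^ fst w) sw)"
        by (rule ext) (simp add: smul_apply plus_fun_apply algebra_simps)
      have Vw: "smul (p ^ c) sw - yv w \<in> Ks p K"
        by (rule Ks_sat[where n = "fst w"]) (unfold idw, rule smod_diff[OF KS Uw smod_smul[OF KS Tw]])
      have C: "yv v - yv w - smul (p ^ c) z \<in> Ks p K" using cs(2) K_Ks unfolding z_def p_def by blast
      have idq: "smul (p ^ c) (sv - sw - z) = (smul (p ^ c) sv - yv v) - (smul (p ^ c) sw - yv w) + (yv v - yv w - smul (p ^ c) z)"
        by (rule ext) (simp add: smul_apply plus_fun_apply algebra_simps)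
      have Q: "sv - sw - z \<in> Ks p K"
        by (rule Ks_sat[where n = c]) (unfold idq, rule smod_add[OF KS smod_diff[OF KS Vv Vw] C])
      have idd: "smul (p ^ 0) (snd (loc_minus p v w)) - smul (p ^ fst (loc_minus p v w)) z
         = smul (p ^ fst w) (smul (p ^ 0) (snd v) - smul (p ^ fst v) sv)
           - smul (p ^ fst v) (smul (p ^ 0) (snd w) - smul (p ^ fst w) sw)
           + smul (p ^ (fst v + fst w)) (sv - sw - z)"
        by (rule ext) (simp add: loc_minus_def smul_apply plus_fun_apply power_add algebra_simps)
      have "smul (p ^ 0) (snd (loc_minus p v w)) - smul (p ^ fst (loc_minus p v w)) z \<in> Ks p K"
        unfolding idd
        by (rule smod_add[OF KS smod_diff[OF KS smod_smul[OF KS Tv] smod_smul[OF KS Tw]] smod_smul[OF KS Q]])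
      then show ?thesis unfolding Iimg_def fs_iff using zI by blast
    qed
  qed
  moreover have "card (Fset (int CARD('p)) c (length ys)) \<le> (CARD('p) ^ c) ^ tb (card X) c"
    by (rule Fset_bound) (use lgs ys(1) in simp)
  ultimately show ?thesis unfolding loc_cosets_def by linarith
qed


theorem proposition3p5:
  fixes dummy :: "'p::card2 itself" and dummyx :: "'x itself"
  assumes "prime CARD('p)"
  shows "\<exists>B :: nat \<Rightarrow> nat \<Rightarrow> nat \<Rightarrow> nat.
    \<forall>(c::nat) (d::nat) (X :: 'x set) (I :: ('x ltree \<Rightarrow> 'p padic_int) set).
      c \<ge> 1 \<longrightarrow> d \<ge> 1 \<longrightarrow> finite X \<longrightarrow> card X = d \<longrightarrow> is_lc_ideal X c I \<longrightarrow>
      (let p = (padic_p :: 'p padic_int); K = nil_rel X c;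
           L = frac_set p K 0 (magma_alg X);
           Iimg = frac_set p K 0 I;
           Ihat = frac_sum p K (lc_comm X c I) c;
           Lhat = frac_sum p K (lc_lcs X c) c
       in finite (loc_cosets p K (L \<inter> Ihat) Iimg) \<and>
          card (loc_cosets p K (L \<inter> Ihat) Iimg) \<le> B CARD('p) c d \<and>
          finite (loc_cosets p K Lhat (loc_sum p K L Ihat)) \<and>
          card (loc_cosets p K Lhat (loc_sum p K L Ihat)) \<le> B CARD('p) c d)"
proof (intro exI[of _ "\<lambda>q c d. (q ^ c) ^ tb d c"] allI impI)
  fix c d :: nat and X :: "'x set" and I :: "('x ltree \<Rightarrow> 'p padic_int) set"
  assume c: "1 \<le> c" and d: "1 \<le> d" and X: "finite X" and cX: "card X = d" and I: "is_lc_ideal X c I"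
  show "let p = (padic_p :: 'p padic_int); K = nil_rel X c;
           L = frac_set p K 0 (magma_alg X);
           Iimg = frac_set p K 0 I;
           Ihat = frac_sum p K (lc_comm X c I) c;
           Lhat = frac_sum p K (lc_lcs X c) c
       in finite (loc_cosets p K (L \<inter> Ihat) Iimg) \<and>
          card (loc_cosets p K (L \<inter> Ihat) Iimg) \<le> (\<lambda>q c d. (q ^ c) ^ tb d c) CARD('p) c d \<and>
          finite (loc_cosets p K Lhat (loc_sum p K L Ihat)) \<and>
          card (loc_cosets p K Lhat (loc_sum p K L Ihat)) \<le> (\<lambda>q c d. (q ^ c) ^ tb d c) CARD('p) c d"
    unfolding Let_def using part_a[OF assms X I] part_b[OF X I] cX by simp
qed

end
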